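(* Let $n\ge2$, let $I$ be an ideal of $\Phi_{A_{n-1}}$ such that $I^c$ is full, and let $\mathcal{A}_I=\{\{x\in\mathbb{R}^n:x_i-x_j=0\}: e_i-e_j\in I^c\}$. Then $$T_{\mathcal{A}_I}(x,y)=\frac{1}{(y-1)^{n-1}}\sum_{i=1}^{n}\Big(\prod_{\substack{j\in[n]\\ j\ne i}}\frac{(x-1)(y-1)-\mathrm{p}(j)}{\mathrm{p}(i)-\mathrm{p}(j)}\Big)\,\bar\chi_{\mathcal{A}_I}(\mathrm{p}(i),y),$$ where, with $A^{(1)}|\dots|A^{(r)}$ the partition of $[n]$ in accordance with $I$ and $R^{(u)}=\{v\in\{u+1,\dots,r\}: s_I(A^{(u)})\cap s_I(A^{(v)})\ne\emptyset\}$, for every odd prime $p$ $$\bar\chi_{\mathcal{A}_I}(p,t)=\frac1p\sum_{(a^{(u)}_s)}\ \prod_{u=1}^r\binom{\#A^{(u)}}{a^{(u)}_1,\dots,a^{(u)}_p}\ \cdot\ t^{\sum_{u=1}^r\sum_{s=1}^p\left(\binom{a^{(u)}_s}{2}+a^{(u)}_s\sum_{v\in R^{(u)}}a^{(v)}_s\right)},$$ the sum running over all families of nonnegative integers $(a^{(u)}_s)_{u\in[r],\,s\in[p]}$ with $\sum_{s=1}^p a^{(u)}_s=\#A^{(u)}$ for each $u$.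
   Context: $\Phi^+_{A_{n-1}}=\{e_i-e_j:1\le i<j\le n\}$ with simple roots $e_i-e_{i+1}$. Partial order: $e_i-e_j\preceq e_{i'}-e_{j'}$ iff $i'\le i$ and $j\le j'$. An ideal is an up-closed subset $I\subseteq\Phi^+_{A_{n-1}}$; $I^c=\Phi^+_{A_{n-1}}\setminus I$; $I^c$ is full if it contains every simple root. Let $e_{i_1}-e_{j_1},\dots,e_{i_k}-e_{j_k}$ be the maximal elements of $I^c$; the signature of $u\in[n]$ is $s_I(u)=\{l\in[k]: i_l\le u\le j_l\}$. The partition in accordance with $I$ is the partition $A^{(1)}|\dots|A^{(r)}$ of $[n]$ into maximal nonempty subsets on which $s_I$ is constant, indexed by increasing minima; $s_I(A^{(u)})$ is the common signature. $\mathrm{r}(\mathcal{B})=n-\dim\bigcap\mathcal{B}$. Tutte polynomial: $T_{\mathcal{A}}(x,y)=\sum_{\mathcal{B}\subseteq\mathcal{A}}(x-1)^{\mathrm{r}(\mathcal{A})-\mathrm{r}(\mathcal{B})}(y-1)^{\#\mathcal{B}-\mathrm{r}(\mathcal{B})}$. Coboundary polynomial: $\bar\chi_{\mathcal{A}}(q,t)=\sum_{\mathcal{B}\subseteq\mathcal{A}}q^{\mathrm{r}(\mathcal{A})-\mathrm{r}(\mathcal{B})}(t-1)^{\#\mathcal{B}}$. For $i\ge1$, $\mathrm{p}(i)$ is the $i$-th odd prime ($\mathrm{p}(1)=3,\mathrm{p}(2)=5,\dots$). *)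

theory Defs
  imports Complex_Main "HOL-Library.Function_Algebras" "HOL-Library.Infinite_Set"
    "HOL-Computational_Algebra.Primes"
begin

text \<open>The root e_i - e_j is represented by the pair (i,j).\<close>

definition pos_roots :: "nat \<Rightarrow> (nat \<times> nat) set" where
  "pos_roots n = {(i, j). 1 \<le> i \<and> i < j \<and> j \<le> n}"

definition root_le :: "nat \<times> nat \<Rightarrow> nat \<times> nat \<Rightarrow> bool" where
  "root_le a b \<longleftrightarrow> fst b \<le> fst a \<and> snd a \<le> snd b"

definition is_ideal :: "nat \<Rightarrow> (nat \<times> nat) set \<Rightarrow> bool" where
  "is_ideal n I \<longleftrightarrow> I \<subseteq> pos_roots n \<and>
     (\<forall>a\<in>I. \<forall>b\<in>pos_roots n. root_le a b \<longrightarrow> b \<in> I)"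

definition compl_roots :: "nat \<Rightarrow> (nat \<times> nat) set \<Rightarrow> (nat \<times> nat) set" where
  "compl_roots n I = pos_roots n - I"

definition is_full :: "nat \<Rightarrow> (nat \<times> nat) set \<Rightarrow> bool" where
  "is_full n C \<longleftrightarrow> (\<forall>i\<in>{1..<n}. (i, Suc i) \<in> C)"

definition max_elems :: "(nat \<times> nat) set \<Rightarrow> (nat \<times> nat) set" where
  "max_elems C = {a \<in> C. \<forall>b\<in>C. root_le a b \<longrightarrow> b = a}"

text \<open>Signature of u: the set of maximal elements (i_l,j_l) of I^c with i_l \<le> u \<le> j_l
  (the maximal elements themselves serve as the labels l).\<close>
definition sig :: "nat \<Rightarrow> (nat \<times> nat) set \<Rightarrow> nat \<Rightarrow> (nat \<times> nat) set" where
  "sig n I u = {m \<in> max_elems (compl_roots n I). fst m \<le> u \<and> u \<le> snd m}"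

definition blocks :: "nat \<Rightarrow> (nat \<times> nat) set \<Rightarrow> nat set set" where
  "blocks n I = {B. B \<noteq> {} \<and> B \<subseteq> {1..n} \<and>
      (\<forall>u\<in>B. \<forall>v\<in>B. sig n I u = sig n I v) \<and>
      (\<forall>B'. B \<subseteq> B' \<and> B' \<subseteq> {1..n} \<and> (\<forall>u\<in>B'. \<forall>v\<in>B'. sig n I u = sig n I v) \<longrightarrow> B' = B)}"

definition num_blocks :: "nat \<Rightarrow> (nat \<times> nat) set \<Rightarrow> nat" where
  "num_blocks n I = card (blocks n I)"

definition block :: "nat \<Rightarrow> (nat \<times> nat) set \<Rightarrow> nat \<Rightarrow> nat set" where
  "block n I u = (THE B. B \<in> blocks n I \<and>
      Min B = sorted_list_of_set (Min ` blocks n I) ! (u - 1))"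

definition block_sig :: "nat \<Rightarrow> (nat \<times> nat) set \<Rightarrow> nat \<Rightarrow> (nat \<times> nat) set" where
  "block_sig n I u = sig n I (Min (block n I u))"

definition Rset :: "nat \<Rightarrow> (nat \<times> nat) set \<Rightarrow> nat \<Rightarrow> nat set" where
  "Rset n I u = {v \<in> {u+1..num_blocks n I}. block_sig n I u \<inter> block_sig n I v \<noteq> {}}"

text \<open>R^n is modelled as the subspace of nat \<Rightarrow> real of functions vanishing outside {1..n}.\<close>
definition Rn :: "nat \<Rightarrow> (nat \<Rightarrow> real) set" where
  "Rn n = {x. \<forall>k. k \<notin> {1..n} \<longrightarrow> x k = 0}"

definition rscale :: "real \<Rightarrow> (nat \<Rightarrow> real) \<Rightarrow> (nat \<Rightarrow> real)" where
  "rscale c x = (\<lambda>k. c * x k)"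

definition hyperplane :: "nat \<Rightarrow> nat \<Rightarrow> nat \<Rightarrow> (nat \<Rightarrow> real) set" where
  "hyperplane n i j = {x \<in> Rn n. x i - x j = 0}"

definition arr :: "nat \<Rightarrow> (nat \<times> nat) set \<Rightarrow> (nat \<Rightarrow> real) set set" where
  "arr n I = {hyperplane n i j | i j. (i, j) \<in> compl_roots n I}"

definition arr_rank :: "nat \<Rightarrow> (nat \<Rightarrow> real) set set \<Rightarrow> nat" where
  "arr_rank n B = n - vector_space.dim rscale (Rn n \<inter> \<Inter>B)"

definition tutte :: "nat \<Rightarrow> (nat \<Rightarrow> real) set set \<Rightarrow> real \<Rightarrow> real \<Rightarrow> real" where
  "tutte n A x y = (\<Sum>B\<in>Pow A. (x - 1) ^ (arr_rank n A - arr_rank n B) *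
                                 (y - 1) ^ (card B - arr_rank n B))"

definition coboundary :: "nat \<Rightarrow> (nat \<Rightarrow> real) set set \<Rightarrow> real \<Rightarrow> real \<Rightarrow> real" where
  "coboundary n A q t = (\<Sum>B\<in>Pow A. q ^ (arr_rank n A - arr_rank n B) * (t - 1) ^ card B)"

text \<open>oddp i = the i-th odd prime (oddp 1 = 3).\<close>
definition oddp :: "nat \<Rightarrow> nat" where
  "oddp i = enumerate {p. prime p \<and> odd p} (i - 1)"

definition multinomial :: "nat \<Rightarrow> nat list \<Rightarrow> real" where
  "multinomial m ks = fact m / (\<Prod>k\<leftarrow>ks. fact k)"

text \<open>Families (a^(u)_s), u in [r], s in [p], of naturals with row sums #A^(u)
  (encoded as functions that vanish outside [r] x [p]).\<close>
definition families :: "nat \<Rightarrow> (nat \<times> nat) set \<Rightarrow> nat \<Rightarrow> (nat \<Rightarrow> nat \<Rightarrow> nat) set" where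
  "families n I p =
     {a. (\<forall>u s. (u \<notin> {1..num_blocks n I} \<or> s \<notin> {1..p}) \<longrightarrow> a u s = 0) \<and>
         (\<forall>u\<in>{1..num_blocks n I}. (\<Sum>s=1..p. a u s) = card (block n I u))}"

definition chi_formula :: "nat \<Rightarrow> (nat \<times> nat) set \<Rightarrow> nat \<Rightarrow> real \<Rightarrow> real" where
  "chi_formula n I p t = (1 / real p) *
     (\<Sum>a\<in>families n I p.
        (\<Prod>u=1..num_blocks n I. multinomial (card (block n I u)) (map (a u) [1..<p+1])) *
        t ^ (\<Sum>u=1..num_blocks n I. \<Sum>s=1..p.
               (a u s choose 2) + a u s * (\<Sum>v\<in>Rset n I u. a v s)))"

end

theory Submission
  imports Defs "HOL-Library.FuncSet" "HOL-Computational_Algebra.Polynomial"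
begin

definition conn :: "(nat \<times> nat) set \<Rightarrow> (nat \<times> nat) set" where
  "conn E = (E \<union> E\<inverse>)\<^sup>*"

definition cls :: "nat \<Rightarrow> (nat \<times> nat) set \<Rightarrow> nat \<Rightarrow> nat set" where
  "cls n E i = {j \<in> {1..n}. (i, j) \<in> conn E}"

definition comps :: "nat \<Rightarrow> (nat \<times> nat) set \<Rightarrow> nat set set" where
  "comps n E = cls n E ` {1..n}"

lemma conn_refl: "(i, i) \<in> conn E"
  by (simp add: conn_def)

lemma conn_sym: "(i, j) \<in> conn E \<Longrightarrow> (j, i) \<in> conn E"
proof -
  assume "(i, j) \<in> conn E"
  hence "(j, i) \<in> ((E \<union> E\<inverse>)\<^sup>*)\<inverse>" by (simp add: conn_def)
  hence "(j, i) \<in> ((E \<union> E\<inverse>)\<inverse>)\<^sup>*" by (simp add: rtrancl_converse)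
  moreover have "(E \<union> E\<inverse>)\<inverse> = E \<union> E\<inverse>" by auto
  ultimately show ?thesis by (simp add: conn_def)
qed

lemma conn_trans: "(i, j) \<in> conn E \<Longrightarrow> (j, k) \<in> conn E \<Longrightarrow> (i, k) \<in> conn E"
  unfolding conn_def by (rule rtrancl_trans)

lemma conn_edge: "(i, j) \<in> E \<Longrightarrow> (i, j) \<in> conn E"
  unfolding conn_def by auto

lemma conn_mono: "E \<subseteq> F \<Longrightarrow> (i, j) \<in> conn E \<Longrightarrow> (i, j) \<in> conn F"
  unfolding conn_def by (meson Un_mono converse_mono rtrancl_mono subsetD)

lemma conn_const:
  assumes "\<forall>(a, b) \<in> E. x a = x b" and "(i, j) \<in> conn E"
  shows "x i = x j"
  using assms(2) unfolding conn_def
proof (induction rule: rtrancl_induct)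
  case base then show ?case by simp
next
  case (step y z) then show ?case using assms(1) by auto
qed

lemma cls_eq_iff:
  assumes "i \<in> {1..n}" "j \<in> {1..n}"
  shows "cls n E i = cls n E j \<longleftrightarrow> (i, j) \<in> conn E"
proof
  assume "cls n E i = cls n E j"
  moreover have "j \<in> cls n E j" using assms by (simp add: cls_def conn_refl)
  ultimately have "j \<in> cls n E i" by simp
  then show "(i, j) \<in> conn E" by (simp add: cls_def)
next
  assume "(i, j) \<in> conn E"
  then show "cls n E i = cls n E j"
    unfolding cls_def using conn_trans conn_sym by blast
qed

lemma mem_cls: "i \<in> {1..n} \<Longrightarrow> i \<in> cls n E i"
  by (simp add: cls_def conn_refl)

lemma cls_sub: "cls n E i \<subseteq> {1..n}"
  by (auto simp: cls_def)

lemma in_comps_cls: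
  assumes "Q \<in> comps n E" "k \<in> Q"
  shows "Q = cls n E k" "k \<in> {1..n}"
proof -
  obtain i where i: "i \<in> {1..n}" "Q = cls n E i" using assms by (auto simp: comps_def)
  have "k \<in> {1..n}" "(i, k) \<in> conn E" using assms i by (auto simp: cls_def)
  then show "Q = cls n E k" "k \<in> {1..n}" using cls_eq_iff i by auto
qed

lemma comps_finite: "finite (comps n E)"
  by (simp add: comps_def)

lemma cls_finite: "finite (cls n E i)"
  by (rule finite_subset[OF cls_sub]) simp

lemma comps_nonempty: "Q \<in> comps n E \<Longrightarrow> Q \<noteq> {}"
  unfolding comps_def using mem_cls by fastforce

lemma comps_card_ge1: "n \<ge> 1 \<Longrightarrow> card (comps n E) \<ge> 1"
  by (simp add: comps_def Suc_le_eq card_gt_0_iff)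

lemma comps_card_le: "card (comps n E) \<le> n"
  unfolding comps_def using card_image_le[of "{1..n}" "cls n E"] by simp

lemma Min_cls:
  assumes "Q \<in> comps n E"
  shows "Min Q \<in> Q" "cls n E (Min Q) = Q"
proof -
  have "finite Q" using assms cls_finite by (auto simp: comps_def)
  moreover have "Q \<noteq> {}" using assms comps_nonempty by auto
  ultimately show "Min Q \<in> Q" by simp
  then show "cls n E (Min Q) = Q" using in_comps_cls assms by metis
qed

lemma sum_fun_apply: "(sum f A) k = (\<Sum>v\<in>A. f v k)"
  by (induction A rule: infinite_finite_induct) auto

interpretation RV: vector_space rscale
  by unfold_locales (auto simp: rscale_def fun_eq_iff algebra_simps)

definition Sp :: "nat \<Rightarrow> (nat \<times> nat) set \<Rightarrow> (nat \<Rightarrow> real) set" where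
  "Sp n E = {x \<in> Rn n. \<forall>(a, b) \<in> E. x a = x b}"

definition ind :: "nat set \<Rightarrow> nat \<Rightarrow> real" where
  "ind Q = (\<lambda>k. if k \<in> Q then 1 else 0)"

lemma ind_inj: "inj ind"
proof (rule injI)
  fix P Q assume "ind P = ind Q"
  then have "\<forall>k. (k \<in> P) = (k \<in> Q)" unfolding ind_def fun_eq_iff
    by (metis zero_neq_one)
  then show "P = Q" by blast
qed

lemma Sp_subspace: "RV.subspace (Sp n E)"
  unfolding RV.subspace_def Sp_def Rn_def by (auto simp: rscale_def split: prod.splits)

lemma ind_in_Sp:
  assumes "E \<subseteq> {1..n} \<times> {1..n}" "Q \<in> comps n E"
  shows "ind Q \<in> Sp n E"
proof -
  have "Q \<subseteq> {1..n}" using assms(2) cls_sub by (auto simp: comps_def)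
  then have "ind Q \<in> Rn n" by (auto simp: Rn_def ind_def)
  moreover have "ind Q a = ind Q b" if "(a, b) \<in> E" for a b
  proof -
    have ab: "a \<in> {1..n}" "b \<in> {1..n}" using that assms(1) by auto
    have "(a, b) \<in> conn E" using that by (rule conn_edge)
    then have "cls n E a = cls n E b" using cls_eq_iff ab by blast
    moreover have "a \<in> Q \<longleftrightarrow> Q = cls n E a" using in_comps_cls[OF assms(2)] mem_cls ab by metis
    moreover have "b \<in> Q \<longleftrightarrow> Q = cls n E b" using in_comps_cls[OF assms(2)] mem_cls ab by metis
    ultimately show ?thesis by (simp add: ind_def)
  qed
  ultimately show ?thesis by (auto simp: Sp_def)
qed

lemma ind_indep: "RV.independent (ind ` comps n E)"
proof -
  have fin: "finite (ind ` comps n E)" by (simp add: comps_finite)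
  have "c v = 0" if sum0: "(\<Sum>v\<in>ind ` comps n E. rscale (c v) v) = 0" and v: "v \<in> ind ` comps n E" for c v
  proof -
    obtain Q where Q: "Q \<in> comps n E" "v = ind Q" using v by auto
    let ?k = "Min Q"
    have kQ: "?k \<in> Q" using Min_cls(1)[OF Q(1)] .
    have "0 = (\<Sum>w\<in>ind ` comps n E. rscale (c w) w) ?k" using sum0 by simp
    also have "\<dots> = (\<Sum>w\<in>ind ` comps n E. c w * w ?k)" by (simp add: sum_fun_apply rscale_def)
    also have "\<dots> = (\<Sum>P\<in>comps n E. c (ind P) * ind P ?k)"
      by (simp add: sum.reindex inj_on_def ind_inj[unfolded inj_def])
    also have "\<dots> = (\<Sum>P\<in>{Q}. c (ind P) * ind P ?k)"
    proof (rule sum.mono_neutral_right)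
      show "finite (comps n E)" by (simp add: comps_finite)
      show "{Q} \<subseteq> comps n E" using Q by simp
      show "\<forall>P\<in>comps n E - {Q}. c (ind P) * ind P ?k = 0"
      proof
        fix P assume P: "P \<in> comps n E - {Q}"
        have "?k \<notin> P"
        proof
          assume "?k \<in> P"
          then have "P = cls n E ?k" using in_comps_cls P by blast
          moreover have "Q = cls n E ?k" using in_comps_cls Q(1) kQ by blast
          ultimately show False using P by simp
        qed
        then show "c (ind P) * ind P ?k = 0" by (simp add: ind_def)
      qed
    qed
    also have "\<dots> = c v" using kQ Q by (simp add: ind_def)
    finally show ?thesis by simp
  qed
  then show ?thesis unfolding RV.dependent_finite[OF fin] by blast
qed

lemma Sp_span:
  assumes "E \<subseteq> {1..n} \<times> {1..n}"
  shows "Sp n E = RV.span (ind ` comps n E)"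
proof
  show "RV.span (ind ` comps n E) \<subseteq> Sp n E"
    by (rule RV.span_minimal) (use ind_in_Sp[OF assms] Sp_subspace in auto)
next
  show "Sp n E \<subseteq> RV.span (ind ` comps n E)"
  proof
    fix x assume x: "x \<in> Sp n E"
    have eq: "x = (\<Sum>Q\<in>comps n E. rscale (x (Min Q)) (ind Q))"
    proof
      fix k
      have "(\<Sum>Q\<in>comps n E. rscale (x (Min Q)) (ind Q)) k = (\<Sum>Q\<in>comps n E. x (Min Q) * ind Q k)"
        by (simp add: sum_fun_apply rscale_def)
      also have "\<dots> = x k"
      proof (cases "k \<in> {1..n}")
        case True
        let ?Q = "cls n E k"
        have Qc: "?Q \<in> comps n E" using True by (simp add: comps_def)
        have "(\<Sum>Q\<in>comps n E. x (Min Q) * ind Q k) = (\<Sum>Q\<in>{?Q}. x (Min Q) * ind Q k)"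
        proof (rule sum.mono_neutral_right)
          show "finite (comps n E)" by (simp add: comps_finite)
          show "{?Q} \<subseteq> comps n E" using Qc by simp
          show "\<forall>P\<in>comps n E - {?Q}. x (Min P) * ind P k = 0"
          proof
            fix P assume P: "P \<in> comps n E - {?Q}"
            have "k \<notin> P"
            proof
              assume "k \<in> P"
              then have "P = ?Q" using in_comps_cls(1)[of P n E k] P by simp
              then show False using P by simp
            qed
            then show "x (Min P) * ind P k = 0" by (simp add: ind_def)
          qed
        qed
        also have "\<dots> = x (Min ?Q)" using mem_cls[OF True] by (simp add: ind_def)
        also have "\<dots> = x k"
        proof -
          have "Min ?Q \<in> ?Q" using Min_cls(1)[OF Qc] .
          then have "(k, Min ?Q) \<in> conn E" by (simp add: cls_def)
          moreover have "\<forall>(a, b) \<in> E. x a = x b" using x by (simp add: Sp_def)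
          ultimately show ?thesis using conn_const by metis
        qed
        finally show ?thesis .
      next
        case False
        have "\<forall>Q\<in>comps n E. ind Q k = 0"
        proof
          fix Q assume "Q \<in> comps n E"
          then have "k \<notin> Q" using in_comps_cls(2)[of Q n E k] False by auto
          then show "ind Q k = 0" by (simp add: ind_def)
        qed
        moreover have "x k = 0" using x False by (simp add: Sp_def Rn_def)
        ultimately show ?thesis by simp
      qed
      finally show "x k = (\<Sum>Q\<in>comps n E. rscale (x (Min Q)) (ind Q)) k" by simp
    qed
    have "(\<Sum>Q\<in>comps n E. rscale (x (Min Q)) (ind Q)) \<in> RV.span (ind ` comps n E)"
      by (intro RV.span_sum RV.span_scale RV.span_base) auto
    then show "x \<in> RV.span (ind ` comps n E)" using eq by simp
  qed
qed

lemma dim_Sp: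
  assumes "E \<subseteq> {1..n} \<times> {1..n}"
  shows "RV.dim (Sp n E) = card (comps n E)"
proof -
  have "RV.dim (Sp n E) = card (ind ` comps n E)"
    using Sp_span[OF assms] RV.dim_span_eq_card_independent[OF ind_indep] by simp
  also have "\<dots> = card (comps n E)"
    by (rule card_image) (simp add: inj_on_def ind_inj[unfolded inj_def])
  finally show ?thesis .
qed

lemma count_const:
  assumes E: "E \<subseteq> {1..n} \<times> {1..n}"
  shows "card {x \<in> PiE {1..n} (\<lambda>_. {1..q::nat}). \<forall>(a, b) \<in> E. x a = x b} = q ^ card (comps n E)"
proof -
  let ?X = "{x \<in> PiE {1..n} (\<lambda>_. {1..q::nat}). \<forall>(a, b) \<in> E. x a = x b}"
  let ?Y = "PiE (comps n E) (\<lambda>_. {1..q})"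
  let ?f = "\<lambda>x. restrict (\<lambda>Q. x (Min Q)) (comps n E)"
  let ?g = "\<lambda>z. restrict (\<lambda>i. z (cls n E i)) {1..n}"
  have "bij_betw ?f ?X ?Y"
  proof (rule bij_betw_byWitness[where f' = ?g])
    show "\<forall>x\<in>?X. ?g (?f x) = x"
    proof
      fix x assume x: "x \<in> ?X"
      show "?g (?f x) = x"
      proof
        fix i
        show "?g (?f x) i = x i"
        proof (cases "i \<in> {1..n}")
          case True
          have c: "cls n E i \<in> comps n E" using True by (simp add: comps_def)
          have "Min (cls n E i) \<in> cls n E i" using Min_cls(1)[OF c] .
          then have "(i, Min (cls n E i)) \<in> conn E" by (simp add: cls_def)
          moreover have "\<forall>(a, b) \<in> E. x a = x b" using x by simp
          ultimately have "x i = x (Min (cls n E i))" using conn_const by metis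
          then show ?thesis using True c by simp
        next
          case False then show ?thesis using x by (auto simp: PiE_def extensional_def)
        qed
      qed
    qed
    show "\<forall>z\<in>?Y. ?f (?g z) = z"
    proof
      fix z assume z: "z \<in> ?Y"
      show "?f (?g z) = z"
      proof
        fix Q
        show "?f (?g z) Q = z Q"
        proof (cases "Q \<in> comps n E")
          case True
          have "Min Q \<in> {1..n}" using in_comps_cls(2)[OF True Min_cls(1)[OF True]] .
          then show ?thesis using True Min_cls(2)[OF True] by simp
        next
          case False then show ?thesis using z by (auto simp: PiE_def extensional_def)
        qed
      qed
    qed
    show "?f ` ?X \<subseteq> ?Y"
    proof
      fix y assume "y \<in> ?f ` ?X"
      then obtain x where x: "x \<in> ?X" "y = ?f x" by blast
      have "x (Min Q) \<in> {1..q}" if "Q \<in> comps n E" for Q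
        using x(1) in_comps_cls(2)[OF that Min_cls(1)[OF that]] by (auto simp: PiE_def Pi_def)
      then show "y \<in> ?Y" using x(2) by auto
    qed
    show "?g ` ?Y \<subseteq> ?X"
    proof
      fix x assume "x \<in> ?g ` ?Y"
      then obtain z where z: "z \<in> ?Y" "x = ?g z" by blast
      have "z (cls n E i) \<in> {1..q}" if "i \<in> {1..n}" for i
        using z(1) that by (auto simp: comps_def)
      then have "x \<in> PiE {1..n} (\<lambda>_. {1..q})" using z(2) by auto
      moreover have "x a = x b" if "(a, b) \<in> E" for a b
      proof -
        have ab: "a \<in> {1..n}" "b \<in> {1..n}" using that E by auto
        have "cls n E a = cls n E b" using cls_eq_iff[OF ab] conn_edge[OF that] by simp
        then show ?thesis using z(2) ab by simp
      qed
      ultimately show "x \<in> ?X" by auto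
    qed
  qed
  then have "card ?X = card ?Y" by (rule bij_betw_same_card)
  also have "\<dots> = q ^ card (comps n E)" by (simp add: card_PiE comps_finite)
  finally show ?thesis .
qed

lemma conn_insert:
  assumes "(u, v) \<in> conn (insert (a, b) E)"
  shows "(u, v) \<in> conn E \<or> (((u, a) \<in> conn E \<or> (u, b) \<in> conn E) \<and> ((a, v) \<in> conn E \<or> (b, v) \<in> conn E))"
  using assms unfolding conn_def[of "insert (a, b) E"]
proof (induction rule: rtrancl_induct)
  case base then show ?case by (simp add: conn_refl)
next
  case (step y z)
  from step(2) have yz: "(y, z) \<in> E \<or> (z, y) \<in> E \<or> (y = a \<and> z = b) \<or> (y = b \<and> z = a)" by auto
  have e: "(y, z) \<in> conn E \<or> (y = a \<and> z = b) \<or> (y = b \<and> z = a)"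
    using yz conn_edge conn_sym by blast
  from step(3) show ?case
  proof
    assume uy: "(u, y) \<in> conn E"
    from e show ?case
    proof (elim disjE conjE)
      assume "(y, z) \<in> conn E" then show ?case using uy conn_trans by blast
    next
      assume "y = a" "z = b" then show ?case using uy conn_refl by blast
    next
      assume "y = b" "z = a" then show ?case using uy conn_refl by blast
    qed
  next
    assume H: "((u, a) \<in> conn E \<or> (u, b) \<in> conn E) \<and> ((a, y) \<in> conn E \<or> (b, y) \<in> conn E)"
    from e show ?case
    proof (elim disjE conjE)
      assume yz: "(y, z) \<in> conn E"
      have "(a, z) \<in> conn E \<or> (b, z) \<in> conn E" using H yz conn_trans by blast
      then show ?case using H by blast
    next
      assume "y = a" "z = b" then show ?case using H conn_refl by blast
    next
      assume "y = b" "z = a" then show ?case using H conn_refl by blast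
    qed
  qed
qed

lemma comps_insert:
  assumes ab: "a \<in> {1..n}" "b \<in> {1..n}"
  shows "card (comps n E) \<le> card (comps n (insert (a, b) E)) + 1"
proof -
  let ?E' = "insert (a, b) E"
  let ?f = "\<lambda>Q. cls n ?E' (Min Q)"
  have img: "?f ` (comps n E - {cls n E a}) \<subseteq> comps n ?E'"
  proof
    fix y assume "y \<in> ?f ` (comps n E - {cls n E a})"
    then obtain Q where Q: "Q \<in> comps n E - {cls n E a}" "y = ?f Q" by blast
    then have Qc: "Q \<in> comps n E" by simp
    have "Min Q \<in> {1..n}" using in_comps_cls(2)[OF Qc Min_cls(1)[OF Qc]] .
    then show "y \<in> comps n ?E'" using Q(2) unfolding comps_def by blast
  qed
  have inj: "inj_on ?f (comps n E - {cls n E a})"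
  proof (rule inj_onI)
    fix P Q assume P: "P \<in> comps n E - {cls n E a}" and Q: "Q \<in> comps n E - {cls n E a}"
      and eq: "?f P = ?f Q"
    have Pc: "P \<in> comps n E" and Qc: "Q \<in> comps n E" using P Q by auto
    let ?p = "Min P" and ?q = "Min Q"
    have pn: "?p \<in> {1..n}" using in_comps_cls(2)[OF Pc Min_cls(1)[OF Pc]] .
    have qn: "?q \<in> {1..n}" using in_comps_cls(2)[OF Qc Min_cls(1)[OF Qc]] .
    have pP: "cls n E ?p = P" using Min_cls(2)[OF Pc] .
    have qQ: "cls n E ?q = Q" using Min_cls(2)[OF Qc] .
    have "(?p, ?q) \<in> conn ?E'" using eq cls_eq_iff[OF pn qn, of ?E'] by simp
    then have disj: "(?p, ?q) \<in> conn E \<or> (((?p, a) \<in> conn E \<or> (?p, b) \<in> conn E) \<and> ((a, ?q) \<in> conn E \<or> (b, ?q) \<in> conn E))"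
      by (rule conn_insert)
    have npa: "(?p, a) \<notin> conn E" using cls_eq_iff[OF pn ab(1), of E] pP P by auto
    have nqa: "(a, ?q) \<notin> conn E"
    proof
      assume "(a, ?q) \<in> conn E"
      then have "(?q, a) \<in> conn E" by (rule conn_sym)
      then have "Q = cls n E a" using cls_eq_iff[OF qn ab(1), of E] qQ by simp
      then show False using Q by simp
    qed
    have "(?p, b) \<in> conn E \<and> (b, ?q) \<in> conn E \<or> (?p, ?q) \<in> conn E" using disj npa nqa by blast
    then have "(?p, ?q) \<in> conn E" using conn_trans by blast
    then show "P = Q" using cls_eq_iff[OF pn qn, of E] pP qQ by simp
  qed
  have "card (comps n E) \<le> card (comps n E - {cls n E a}) + 1"
    using card_Diff_singleton_if[of "comps n E" "cls n E a"] by (simp split: if_splits)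
  also have "card (comps n E - {cls n E a}) = card (?f ` (comps n E - {cls n E a}))"
    using card_image[OF inj] by simp
  also have "\<dots> \<le> card (comps n ?E')" by (rule card_mono[OF comps_finite img])
  finally show ?thesis by simp
qed

lemma comps_empty: "card (comps n {}) = n"
proof -
  have "cls n {} i = {i}" if "i \<in> {1..n}" for i
    using that by (auto simp: cls_def conn_def)
  then have "comps n {} = (\<lambda>i. {i}) ` {1..n}" unfolding comps_def by auto
  then show ?thesis by (simp add: card_image)
qed

lemma comps_card_edges:
  assumes "finite E" "E \<subseteq> {1..n} \<times> {1..n}"
  shows "n \<le> card (comps n E) + card E"
  using assms
proof (induction E rule: finite_induct)
  case empty then show ?case by (simp add: comps_empty)
next
  case (insert e E)
  obtain a b where e: "e = (a, b)" by (cases e)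
  have ab: "a \<in> {1..n}" "b \<in> {1..n}" using insert(4) e by auto
  have "n \<le> card (comps n E) + card E" using insert by auto
  also have "\<dots> \<le> card (comps n (insert e E)) + 1 + card E" using comps_insert[OF ab, of E] e by simp
  also have "\<dots> = card (comps n (insert e E)) + card (insert e E)" using insert(1,2) by simp
  finally show ?case .
qed

lemma comps_connected:
  assumes "\<forall>i\<in>{1..<n}. (i, Suc i) \<in> E" "n \<ge> 1"
  shows "card (comps n E) = 1"
proof -
  have one: "(1, i) \<in> conn E" if "i \<in> {1..n}" for i
    using that
  proof (induction i)
    case 0 then show ?case by simp
  next
    case (Suc i)
    show ?case
    proof (cases "i = 0")
      case True then show ?thesis by (simp add: conn_refl)
    next
      case False
      then have "(1, i) \<in> conn E" using Suc by auto
      moreover have "(i, Suc i) \<in> E" using assms(1) Suc(2) False by auto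
      ultimately show ?thesis by (rule conn_trans[OF _ conn_edge])
    qed
  qed
  have all1: "cls n E i = cls n E 1" if "i \<in> {1..n}" for i
  proof -
    have "(i, 1) \<in> conn E" using conn_sym[OF one[OF that]] .
    moreover have "(1::nat) \<in> {1..n}" using assms(2) by simp
    ultimately show ?thesis using cls_eq_iff[OF that, of 1 E] by simp
  qed
  have "comps n E = {cls n E 1}"
  proof
    show "comps n E \<subseteq> {cls n E 1}" unfolding comps_def using all1 by blast
    show "{cls n E 1} \<subseteq> comps n E" unfolding comps_def using assms(2) by simp
  qed
  then show ?thesis by simp
qed

locale AI =
  fixes n :: nat and I :: "(nat \<times> nat) set"
  assumes n2: "n \<ge> 2" and ideal: "is_ideal n I" and full: "is_full n (compl_roots n I)"
begin

abbreviation "C \<equiv> compl_roots n I"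
abbreviation "r \<equiv> num_blocks n I"

lemma C_pos: "C \<subseteq> pos_roots n"
  by (auto simp: compl_roots_def)

lemma C_sq: "C \<subseteq> {1..n} \<times> {1..n}"
  using C_pos by (auto simp: pos_roots_def)

lemma C_fin: "finite C"
  using C_sq by (rule finite_subset) simp

lemma C_down:
  assumes "a \<in> C" "b \<in> pos_roots n" "root_le b a"
  shows "b \<in> C"
proof (rule ccontr)
  assume "b \<notin> C"
  then have "b \<in> I" using assms(2) by (simp add: compl_roots_def)
  then have "a \<in> I" using ideal assms(1,3) by (auto simp: is_ideal_def compl_roots_def)
  then show False using assms(1) by (simp add: compl_roots_def)
qed

lemma C_max:
  assumes "c \<in> C"
  shows "\<exists>m\<in>max_elems C. root_le c m"
proof -
  let ?S = "{b \<in> C. root_le c b}"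
  let ?g = "\<lambda>b::nat\<times>nat. snd b + (n - fst b)"
  have fin: "finite ?S" using C_fin by simp
  have "c \<in> ?S" using assms by (simp add: root_le_def)
  then have ne: "?S \<noteq> {}" by blast
  obtain b where b: "b \<in> ?S" "?g b = Max (?g ` ?S)"
    using Max_in[of "?g ` ?S"] fin ne by (metis (no_types, lifting) empty_is_image finite_imageI imageE)
  have bmax: "?g b' \<le> ?g b" if "b' \<in> ?S" for b'
    using b(2) Max_ge[of "?g ` ?S" "?g b'"] fin that by simp
  have "b \<in> max_elems C"
    unfolding max_elems_def
  proof (intro CollectI conjI ballI impI)
    show "b \<in> C" using b by simp
    fix b' assume b': "b' \<in> C" "root_le b b'"
    then have "b' \<in> ?S" using b(1) by (auto simp: root_le_def)
    then have "?g b' \<le> ?g b" by (rule bmax)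
    moreover have "fst b \<le> n" using b(1) C_sq by auto
    ultimately show "b' = b" using b'(2) by (auto simp: root_le_def prod_eq_iff)
  qed
  then show ?thesis using b(1) by auto
qed

lemma C_iff:
  assumes "i < j" "i \<in> {1..n}" "j \<in> {1..n}"
  shows "(i, j) \<in> C \<longleftrightarrow> sig n I i \<inter> sig n I j \<noteq> {}"
proof
  assume "(i, j) \<in> C"
  then obtain m where m: "m \<in> max_elems C" "root_le (i, j) m" using C_max by blast
  then have "m \<in> sig n I i \<inter> sig n I j" using assms(1) by (auto simp: sig_def root_le_def)
  then show "sig n I i \<inter> sig n I j \<noteq> {}" by blast
next
  assume "sig n I i \<inter> sig n I j \<noteq> {}"
  then obtain m where m: "m \<in> max_elems C" "fst m \<le> i" "j \<le> snd m"
    by (auto simp: sig_def)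
  have "m \<in> C" using m(1) by (simp add: max_elems_def)
  moreover have "(i, j) \<in> pos_roots n" using assms by (auto simp: pos_roots_def)
  moreover have "root_le (i, j) m" using m by (simp add: root_le_def)
  ultimately show "(i, j) \<in> C" by (rule C_down)
qed

lemma simple_in_C: "i \<in> {1..<n} \<Longrightarrow> (i, Suc i) \<in> C"
  using full by (simp add: is_full_def)

lemma sig_ne:
  assumes "i \<in> {1..n}"
  shows "sig n I i \<noteq> {}"
proof -
  obtain a where a: "(a, Suc a) \<in> C" "a \<le> i" "i \<le> Suc a"
  proof (cases "i < n")
    case True then show ?thesis using that[of i] simple_in_C assms by auto
  next
    case False
    then have "i = n" using assms by auto
    then show ?thesis using that[of "n - 1"] simple_in_C[of "n - 1"] n2 by auto
  qed
  then obtain m where m: "m \<in> max_elems C" "root_le (a, Suc a) m" using C_max by blast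
  then have "m \<in> sig n I i" using a by (auto simp: sig_def root_le_def)
  then show ?thesis by blast
qed

definition L :: "nat \<Rightarrow> nat set" where
  "L i = {j \<in> {1..n}. sig n I j = sig n I i}"

lemma blocks_eq: "blocks n I = L ` {1..n}"
proof
  show "blocks n I \<subseteq> L ` {1..n}"
  proof
    fix B assume B: "B \<in> blocks n I"
    then have Bd: "B \<noteq> {} \<and> B \<subseteq> {1..n} \<and> (\<forall>u\<in>B. \<forall>v\<in>B. sig n I u = sig n I v) \<and>
      (\<forall>B'. B \<subseteq> B' \<and> B' \<subseteq> {1..n} \<and> (\<forall>u\<in>B'. \<forall>v\<in>B'. sig n I u = sig n I v) \<longrightarrow> B' = B)"
      unfolding blocks_def by (rule CollectD)
    from Bd have Bne: "B \<noteq> {}" by (rule conjunct1)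
    from Bd have Bn: "B \<subseteq> {1..n}" by (rule conjunct1[OF conjunct2])
    from Bd have const: "\<forall>u\<in>B. \<forall>v\<in>B. sig n I u = sig n I v" by (rule conjunct1[OF conjunct2[OF conjunct2]])
    from Bd have maxi0: "\<forall>B'. B \<subseteq> B' \<and> B' \<subseteq> {1..n} \<and> (\<forall>u\<in>B'. \<forall>v\<in>B'. sig n I u = sig n I v) \<longrightarrow> B' = B"
      by (rule conjunct2[OF conjunct2[OF conjunct2]])
    have maxi: "B' = B" if "B \<subseteq> B' \<and> B' \<subseteq> {1..n} \<and> (\<forall>u\<in>B'. \<forall>v\<in>B'. sig n I u = sig n I v)" for B'
      using maxi0 that by blast
    obtain i where i: "i \<in> B" using Bne by blast
    have 1: "B \<subseteq> L i"
    proof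
      fix j assume j: "j \<in> B"
      then have "sig n I j = sig n I i" using const i by blast
      then show "j \<in> L i" using j Bn unfolding L_def by blast
    qed
    have 2: "L i \<subseteq> {1..n}" by (auto simp: L_def)
    have 3: "\<forall>u\<in>L i. \<forall>v\<in>L i. sig n I u = sig n I v" by (auto simp: L_def)
    have "L i = B" by (rule maxi) (use 1 2 3 in blast)
    moreover have "i \<in> {1..n}" using i Bn by auto
    ultimately show "B \<in> L ` {1..n}" by blast
  qed
next
  show "L ` {1..n} \<subseteq> blocks n I"
  proof
    fix B assume "B \<in> L ` {1..n}"
    then obtain i where i: "i \<in> {1..n}" "B = L i" by blast
    have iB: "i \<in> B" using i by (simp add: L_def)
    have Bn: "B \<subseteq> {1..n}" using i by (auto simp: L_def)
    have cst: "\<forall>u\<in>B. \<forall>v\<in>B. sig n I u = sig n I v"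
    proof (intro ballI)
      fix u v assume "u \<in> B" "v \<in> B"
      then have "sig n I u = sig n I i" "sig n I v = sig n I i" using i by (simp_all add: L_def)
      then show "sig n I u = sig n I v" by simp
    qed
    have mx: "B' = B" if "B \<subseteq> B' \<and> B' \<subseteq> {1..n} \<and> (\<forall>u\<in>B'. \<forall>v\<in>B'. sig n I u = sig n I v)" for B'
    proof
      show "B \<subseteq> B'" using that by blast
      show "B' \<subseteq> B"
      proof
        fix j assume "j \<in> B'"
        moreover have "i \<in> B'" using iB that by blast
        ultimately have "sig n I j = sig n I i" using that by blast
        moreover have "j \<in> {1..n}" using \<open>j \<in> B'\<close> that by blast
        ultimately show "j \<in> B" using i(2) unfolding L_def by blast
      qed
    qed
    show "B \<in> blocks n I" unfolding blocks_def mem_Collect_eq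
    proof (intro conjI allI impI)
      show "B \<noteq> {}" using iB by blast
      show "B \<subseteq> {1..n}" by (rule Bn)
      show "\<forall>u\<in>B. \<forall>v\<in>B. sig n I u = sig n I v" by (rule cst)
      fix B' assume "B \<subseteq> B' \<and> B' \<subseteq> {1..n} \<and> (\<forall>u\<in>B'. \<forall>v\<in>B'. sig n I u = sig n I v)"
      then show "B' = B" by (rule mx)
    qed
  qed
qed

lemma L_mem: "i \<in> {1..n} \<Longrightarrow> i \<in> L i"
  by (simp add: L_def)

lemma L_eq: "i \<in> {1..n} \<Longrightarrow> j \<in> L i \<Longrightarrow> L j = L i"
  by (auto simp: L_def)

lemma blocks_fin: "finite (blocks n I)"
  by (simp add: blocks_eq)

lemma blocks_sub: "B \<in> blocks n I \<Longrightarrow> B \<subseteq> {1..n}"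
  by (auto simp: blocks_eq L_def)

lemma blocks_ne: "B \<in> blocks n I \<Longrightarrow> B \<noteq> {}"
  unfolding blocks_eq using L_mem by blast

lemma blocks_Min: "B \<in> blocks n I \<Longrightarrow> Min B \<in> B"
  using blocks_ne blocks_sub by (meson Min_in finite_atLeastAtMost finite_subset)

lemma blocks_eq_L: "B \<in> blocks n I \<Longrightarrow> j \<in> B \<Longrightarrow> B = L j"
proof -
  assume "B \<in> blocks n I" "j \<in> B"
  then obtain i where i: "i \<in> {1..n}" "B = L i" by (auto simp: blocks_eq)
  then show "B = L j" using L_eq[OF i(1)] \<open>j \<in> B\<close> by simp
qed

lemma blocks_disj: "B1 \<in> blocks n I \<Longrightarrow> B2 \<in> blocks n I \<Longrightarrow> j \<in> B1 \<Longrightarrow> j \<in> B2 \<Longrightarrow> B1 = B2"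
  using blocks_eq_L by metis

lemma Min_inj: "inj_on Min (blocks n I)"
proof (rule inj_onI)
  fix B1 B2 assume B: "B1 \<in> blocks n I" "B2 \<in> blocks n I" "Min B1 = Min B2"
  then show "B1 = B2" using blocks_disj blocks_Min by metis
qed

definition sl :: "nat list" where "sl = sorted_list_of_set (Min ` blocks n I)"

lemma sl_len: "length sl = r"
  unfolding sl_def num_blocks_def using card_image[OF Min_inj] by simp

lemma sl_set: "set sl = Min ` blocks n I"
  unfolding sl_def by (simp add: blocks_fin)

lemma sl_dist: "distinct sl"
  unfolding sl_def by simp

lemma block_spec:
  assumes "u \<in> {1..r}"
  shows "block n I u \<in> blocks n I \<and> Min (block n I u) = sl ! (u - 1)"
proof -
  have "sl ! (u - 1) \<in> set sl" using assms sl_len by auto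
  then obtain B where B: "B \<in> blocks n I" "Min B = sl ! (u - 1)" using sl_set by auto
  have "\<exists>!B. B \<in> blocks n I \<and> Min B = sl ! (u - 1)"
    by (rule ex1I[of _ B]) (use B Min_inj in \<open>auto simp: inj_on_def\<close>)
  then show ?thesis unfolding block_def sl_def[symmetric] by (rule theI')
qed

lemma block_in: "u \<in> {1..r} \<Longrightarrow> block n I u \<in> blocks n I"
  using block_spec by blast

lemma block_inj: "inj_on (block n I) {1..r}"
proof (rule inj_onI)
  fix u v assume uv: "u \<in> {1..r}" "v \<in> {1..r}" "block n I u = block n I v"
  then have "sl ! (u - 1) = sl ! (v - 1)" using block_spec by metis
  then have "u - 1 = v - 1" using sl_dist uv sl_len nth_eq_iff_index_eq by fastforce
  then show "u = v" using uv by auto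
qed

lemma block_surj: "blocks n I = block n I ` {1..r}"
proof
  show "block n I ` {1..r} \<subseteq> blocks n I" using block_in by blast
  show "blocks n I \<subseteq> block n I ` {1..r}"
  proof
    fix B assume B: "B \<in> blocks n I"
    then have "Min B \<in> set sl" using sl_set by simp
    then obtain k where k: "k < r" "sl ! k = Min B" using sl_len by (metis in_set_conv_nth)
    have u: "Suc k \<in> {1..r}" using k by simp
    have "Min (block n I (Suc k)) = Min B" using block_spec[OF u] k by simp
    then have "block n I (Suc k) = B" using Min_inj block_in[OF u] B by (auto simp: inj_on_def)
    then show "B \<in> block n I ` {1..r}" using u by blast
  qed
qed

lemma r_le: "r \<le> n"
  unfolding num_blocks_def blocks_eq using card_image_le[of "{1..n}" L] by simp

lemma block_sub: "u \<in> {1..r} \<Longrightarrow> block n I u \<subseteq> {1..n}"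
  using block_in blocks_sub by blast

lemma block_fin: "u \<in> {1..r} \<Longrightarrow> finite (block n I u)"
  by (rule finite_subset[OF block_sub]) simp_all

end

lemma choose2: "2 * (a choose 2) + a = a * (a::nat)"
  by (induction a) (auto simp: numeral_2_eq_2 algebra_simps)

context AI
begin

definition bl :: "nat \<Rightarrow> nat" where
  "bl i = (THE u. u \<in> {1..r} \<and> i \<in> block n I u)"

lemma block_unique:
  assumes "u \<in> {1..r}" "v \<in> {1..r}" "i \<in> block n I u" "i \<in> block n I v"
  shows "u = v"
proof -
  have "block n I u = block n I v"
    using blocks_disj[OF block_in[OF assms(1)] block_in[OF assms(2)] assms(3,4)] .
  then show ?thesis using inj_onD[OF block_inj _ assms(1,2)] by simp
qed

lemma bl_eq: "u \<in> {1..r} \<Longrightarrow> i \<in> block n I u \<Longrightarrow> bl i = u"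
  unfolding bl_def by (rule the_equality) (auto intro: block_unique)

lemma bl:
  assumes "i \<in> {1..n}"
  shows "bl i \<in> {1..r}" "i \<in> block n I (bl i)"
proof -
  have "L i \<in> blocks n I" using assms by (simp add: blocks_eq)
  then obtain u where u: "u \<in> {1..r}" "block n I u = L i" using block_surj by auto
  then have "i \<in> block n I u" using L_mem[OF assms] by simp
  then show "bl i \<in> {1..r}" "i \<in> block n I (bl i)" using bl_eq[OF u(1)] u(1) by auto
qed

lemma sig_block:
  assumes "u \<in> {1..r}" "i \<in> block n I u"
  shows "sig n I i = block_sig n I u"
proof -
  have B: "block n I u \<in> blocks n I" using block_in[OF assms(1)] .
  have "block n I u = L i" using blocks_eq_L[OF B assms(2)] .
  moreover have "Min (block n I u) \<in> block n I u" using blocks_Min[OF B] .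
  ultimately have "sig n I (Min (block n I u)) = sig n I i" by (simp add: L_def)
  then show ?thesis by (simp add: block_sig_def)
qed

definition M :: "nat \<Rightarrow> nat \<Rightarrow> bool" where
  "M u v \<longleftrightarrow> block_sig n I u \<inter> block_sig n I v \<noteq> {}"

lemma M_sym: "M u v = M v u"
  by (auto simp: M_def)

lemma M_refl:
  assumes "u \<in> {1..r}"
  shows "M u u"
proof -
  have B: "block n I u \<in> blocks n I" using block_in[OF assms] .
  have "Min (block n I u) \<in> {1..n}" using blocks_Min[OF B] blocks_sub[OF B] by blast
  then have "block_sig n I u \<noteq> {}" using sig_ne by (simp add: block_sig_def)
  then show ?thesis by (simp add: M_def)
qed

lemma C_bl:
  assumes "i \<in> {1..n}" "j \<in> {1..n}" "i < j"
  shows "(i, j) \<in> C \<longleftrightarrow> M (bl i) (bl j)"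
  using C_iff[OF assms(3,1,2)] sig_block[OF bl(1) bl(2)] assms(1,2)
  by (simp add: M_def)

definition cnt :: "nat set \<Rightarrow> nat \<Rightarrow> nat" where
  "cnt V u = card (V \<inter> block n I u)"

lemma sum_blocks:
  assumes "V \<subseteq> {1..n}"
  shows "(\<Sum>i\<in>V. f i) = (\<Sum>u=1..r. \<Sum>i\<in>V \<inter> block n I u. f i)"
proof -
  have "V = (\<Union>u\<in>{1..r}. V \<inter> block n I u)"
    using assms bl by blast
  then have "(\<Sum>i\<in>V. f i) = (\<Sum>i\<in>(\<Union>u\<in>{1..r}. V \<inter> block n I u). f i)" by simp
  also have "\<dots> = (\<Sum>u=1..r. \<Sum>i\<in>V \<inter> block n I u. f i)"
  proof (rule sum.UNION_disjoint)
    show "finite {1..r}" by simp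
    show "\<forall>u\<in>{1..r}. finite (V \<inter> block n I u)" using block_fin by blast
    show "\<forall>u\<in>{1..r}. \<forall>v\<in>{1..r}. u \<noteq> v \<longrightarrow> V \<inter> block n I u \<inter> (V \<inter> block n I v) = {}"
      using block_unique by blast
  qed
  finally show ?thesis .
qed

lemma sum_blocks_bl:
  assumes "V \<subseteq> {1..n}"
  shows "(\<Sum>i\<in>V. f (bl i)) = (\<Sum>u=1..r. cnt V u * f u)"
proof -
  have "(\<Sum>i\<in>V. f (bl i)) = (\<Sum>u=1..r. \<Sum>i\<in>V \<inter> block n I u. f (bl i))"
    by (rule sum_blocks[OF assms])
  also have "\<dots> = (\<Sum>u=1..r. \<Sum>i\<in>V \<inter> block n I u. f u)"
    by (intro sum.cong refl) (simp add: bl_eq)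
  also have "\<dots> = (\<Sum>u=1..r. cnt V u * f u)" by (simp add: cnt_def)
  finally show ?thesis .
qed

definition SS :: "nat set \<Rightarrow> nat \<Rightarrow> nat" where
  "SS V w = (\<Sum>v=1..r. if M w v then cnt V v else 0)"

lemma card_M:
  assumes "V \<subseteq> {1..n}"
  shows "card {j \<in> V. M w (bl j)} = SS V w"
proof -
  have fV: "finite V" by (rule finite_subset[OF assms]) simp
  have "card {j \<in> V. M w (bl j)} = (\<Sum>j\<in>V. if M w (bl j) then 1 else 0)"
    using fV by (simp add: sum.inter_filter[symmetric])
  also have "\<dots> = (\<Sum>u=1..r. cnt V u * (if M w u then 1 else 0))"
    by (rule sum_blocks_bl[OF assms, where f = "\<lambda>u. if M w u then 1 else 0"])
  also have "\<dots> = SS V w" unfolding SS_def by (intro sum.cong refl) simp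
  finally show ?thesis .
qed

lemma pairs_count:
  assumes V: "V \<subseteq> {1..n}"
  shows "card {e \<in> C. fst e \<in> V \<and> snd e \<in> V} =
    (\<Sum>u=1..r. (cnt V u choose 2) + cnt V u * (\<Sum>v\<in>Rset n I u. cnt V v))"
proof -
  have fV: "finite V" by (rule finite_subset[OF assms]) simp
  let ?CV = "{e \<in> C. fst e \<in> V \<and> snd e \<in> V}"
  let ?P = "{(i, j). i \<in> V \<and> j \<in> V \<and> i \<noteq> j \<and> M (bl i) (bl j)}"
  let ?c = "cnt V"
  have fCV: "finite ?CV" using C_fin by simp
  have CV_char: "(i, j) \<in> ?CV \<longleftrightarrow> i \<in> V \<and> j \<in> V \<and> i < j \<and> M (bl i) (bl j)" for i j
  proof
    assume h: "(i, j) \<in> ?CV"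
    then have "i < j" using C_pos by (auto simp: pos_roots_def)
    moreover have ij: "i \<in> {1..n}" "j \<in> {1..n}" using h V by auto
    ultimately show "i \<in> V \<and> j \<in> V \<and> i < j \<and> M (bl i) (bl j)" using h C_bl[OF ij] by auto
  next
    assume h: "i \<in> V \<and> j \<in> V \<and> i < j \<and> M (bl i) (bl j)"
    moreover have ij: "i \<in> {1..n}" "j \<in> {1..n}" using h V by auto
    ultimately have "(i, j) \<in> C" using C_bl[OF ij] by auto
    then show "(i, j) \<in> ?CV" using h by simp
  qed
  have P_split: "?P = ?CV \<union> prod.swap ` ?CV"
  proof (rule set_eqI)
    fix e :: "nat \<times> nat"
    obtain i j where e: "e = (i, j)" by (cases e)
    have "e \<in> ?P \<longleftrightarrow> (i \<in> V \<and> j \<in> V \<and> i < j \<and> M (bl i) (bl j)) \<or> (i \<in> V \<and> j \<in> V \<and> j < i \<and> M (bl j) (bl i))"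
      using e M_sym by auto
    also have "\<dots> \<longleftrightarrow> e \<in> ?CV \<union> prod.swap ` ?CV"
    proof -
      have "(j, i) \<in> ?CV \<longleftrightarrow> (i \<in> V \<and> j \<in> V \<and> j < i \<and> M (bl j) (bl i))" using CV_char[of j i] by auto
      moreover have "(i, j) \<in> prod.swap ` ?CV \<longleftrightarrow> (j, i) \<in> ?CV" by force
      ultimately show ?thesis using CV_char[of i j] e by auto
    qed
    finally show "e \<in> ?P \<longleftrightarrow> e \<in> ?CV \<union> prod.swap ` ?CV" .
  qed
  have disj: "?CV \<inter> prod.swap ` ?CV = {}"
  proof -
    have "False" if "e \<in> ?CV" "e \<in> prod.swap ` ?CV" for e
    proof -
      obtain i j where e: "e = (i, j)" by (cases e)
      note that = that[unfolded e]
      have "(j, i) \<in> ?CV" using that(2) by force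
      then have "j < i" using CV_char[of j i] by blast
      moreover have "i < j" using that(1) CV_char[of i j] by blast
      ultimately show False by simp
    qed
    then show ?thesis by blast
  qed
  have cardP: "card ?P = 2 * card ?CV"
  proof -
    have "card ?P = card ?CV + card (prod.swap ` ?CV)"
      unfolding P_split by (rule card_Un_disjoint[OF fCV finite_imageI[OF fCV] disj])
    also have "card (prod.swap ` ?CV) = card ?CV" by (rule card_image) (simp add: inj_on_def)
    finally show ?thesis by simp
  qed
  have P_sigma: "?P = Sigma V (\<lambda>i. {j \<in> V. j \<noteq> i \<and> M (bl i) (bl j)})" by auto
  have cardP2: "card ?P = (\<Sum>i\<in>V. card {j \<in> V. j \<noteq> i \<and> M (bl i) (bl j)})"
    unfolding P_sigma using fV by (simp add: card_SigmaI)
  have one: "card {j \<in> V. M (bl i) (bl j)} = card {j \<in> V. j \<noteq> i \<and> M (bl i) (bl j)} + 1" if i: "i \<in> V" for i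
  proof -
    have "M (bl i) (bl i)" using M_refl bl i V by blast
    then have "{j \<in> V. M (bl i) (bl j)} = insert i {j \<in> V. j \<noteq> i \<and> M (bl i) (bl j)}" using i by auto
    then show ?thesis using fV by simp
  qed
  have "card ?P + card V = (\<Sum>i\<in>V. card {j \<in> V. M (bl i) (bl j)})"
    using cardP2 one fV by (simp add: sum.distrib sum_Suc)
  also have "\<dots> = (\<Sum>i\<in>V. SS V (bl i))" using card_M[OF V] by simp
  also have "\<dots> = (\<Sum>u=1..r. ?c u * SS V u)" by (rule sum_blocks_bl[OF V])
  finally have A: "2 * card ?CV + card V = (\<Sum>u=1..r. ?c u * SS V u)" using cardP by simp
  have cV: "card V = (\<Sum>u=1..r. ?c u)"
    using sum_blocks_bl[OF V, where f = "\<lambda>_. 1"] fV by simp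
  define Rt where "Rt u = (\<Sum>v=1..r. if u < v \<and> M u v then ?c v else 0)" for u
  define Lt where "Lt u = (\<Sum>v=1..r. if v < u \<and> M u v then ?c v else 0)" for u
  have SS_split: "SS V u = ?c u + Rt u + Lt u" if u: "u \<in> {1..r}" for u
  proof -
    have "SS V u = (\<Sum>v=1..r. (if v = u then ?c v else 0) + (if u < v \<and> M u v then ?c v else 0) + (if v < u \<and> M u v then ?c v else 0))"
      unfolding SS_def using M_refl[OF u] by (intro sum.cong refl) auto
    also have "\<dots> = (\<Sum>v=1..r. if v = u then ?c v else 0) + Rt u + Lt u"
      by (simp add: sum.distrib Rt_def Lt_def)
    also have "(\<Sum>v=1..r. if v = u then ?c v else 0) = ?c u" using u by (simp add: sum.delta)
    finally show ?thesis .
  qed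
  have swap: "(\<Sum>u=1..r. ?c u * Lt u) = (\<Sum>u=1..r. ?c u * Rt u)"
  proof -
    have "(\<Sum>u=1..r. ?c u * Lt u) = (\<Sum>u=1..r. \<Sum>v=1..r. if v < u \<and> M u v then ?c u * ?c v else 0)"
      unfolding Lt_def by (simp add: sum_distrib_left if_distrib cong: if_cong)
    also have "\<dots> = (\<Sum>v=1..r. \<Sum>u=1..r. if v < u \<and> M u v then ?c u * ?c v else 0)"
      by (rule sum.swap)
    also have "\<dots> = (\<Sum>v=1..r. \<Sum>u=1..r. if v < u \<and> M v u then ?c v * ?c u else 0)"
      by (intro sum.cong refl) (simp add: M_sym[of _ "_::nat"] mult.commute)
    also have "\<dots> = (\<Sum>u=1..r. ?c u * Rt u)"
      unfolding Rt_def by (simp add: sum_distrib_left if_distrib cong: if_cong)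
    finally show ?thesis .
  qed
  have Rset_eq: "(\<Sum>v\<in>Rset n I u. ?c v) = Rt u" for u
  proof -
    have "Rset n I u = {v \<in> {1..r}. u < v \<and> M u v}" by (auto simp: Rset_def M_def)
    then show ?thesis unfolding Rt_def
      using sum.inter_filter[of "{1..r}" "cnt V" "\<lambda>v. u < v \<and> M u v"] by simp
  qed
  have "2 * card ?CV + (\<Sum>u=1..r. ?c u) = (\<Sum>u=1..r. ?c u * (?c u + Rt u + Lt u))"
    using A cV SS_split by simp
  also have "\<dots> = (\<Sum>u=1..r. ?c u * ?c u) + (\<Sum>u=1..r. ?c u * Rt u) + (\<Sum>u=1..r. ?c u * Lt u)"
    by (simp add: sum.distrib algebra_simps)
  also have "\<dots> = (\<Sum>u=1..r. 2 * (?c u choose 2) + ?c u) + 2 * (\<Sum>u=1..r. ?c u * Rt u)"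
    using swap by (simp add: choose2)
  also have "\<dots> = 2 * (\<Sum>u=1..r. (?c u choose 2) + ?c u * Rt u) + (\<Sum>u=1..r. ?c u)"
    by (simp add: sum.distrib sum_distrib_left algebra_simps)
  finally have "card ?CV = (\<Sum>u=1..r. (?c u choose 2) + ?c u * Rt u)" by simp
  then show ?thesis using Rset_eq by simp
qed

end

definition Yset :: "nat set \<Rightarrow> nat \<Rightarrow> (nat \<Rightarrow> nat) \<Rightarrow> (nat \<Rightarrow> nat) set" where
  "Yset A p k = {y \<in> PiE A (\<lambda>_. {1..p}). \<forall>s\<in>{1..p}. card {i \<in> A. y i = s} = k s}"

lemma Yset_step:
  assumes fA: "finite A"
  shows "card (Yset A (Suc p) k) =
    card (Sigma {S. S \<subseteq> A \<and> card S = k (Suc p)} (\<lambda>S. Yset (A - S) p k))"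
proof -
  let ?q = "Suc p"
  let ?Sub = "{S. S \<subseteq> A \<and> card S = k ?q}"
  let ?f = "\<lambda>y. ({i \<in> A. y i = ?q}, restrict y (A - {i \<in> A. y i = ?q}))"
  let ?g = "\<lambda>(S, z). (\<lambda>i. if i \<in> S then ?q else z i)"
  have "bij_betw ?f (Yset A ?q k) (Sigma ?Sub (\<lambda>S. Yset (A - S) p k))"
  proof (rule bij_betw_byWitness[where f' = ?g])
    show "\<forall>y\<in>Yset A ?q k. ?g (?f y) = y"
    proof
      fix y assume y: "y \<in> Yset A ?q k"
      show "?g (?f y) = y"
      proof
        fix i
        show "?g (?f y) i = y i"
          using y by (cases "i \<in> A") (auto simp: Yset_def PiE_def extensional_def)
      qed
    qed
    show "\<forall>w\<in>Sigma ?Sub (\<lambda>S. Yset (A - S) p k). ?f (?g w) = w"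
    proof
      fix w assume w: "w \<in> Sigma ?Sub (\<lambda>S. Yset (A - S) p k)"
      obtain S z where wSz: "w = (S, z)" by (cases w)
      have S: "S \<subseteq> A" and z: "z \<in> PiE (A - S) (\<lambda>_. {1..p})" using w wSz by (auto simp: Yset_def)
      have zv: "z i \<in> {1..p}" if "i \<in> A - S" for i using z that by auto
      have zu: "z i = undefined" if "i \<notin> A - S" for i using z that by (auto simp: PiE_def extensional_def)
      have 1: "{i \<in> A. ?g w i = ?q} = S"
      proof -
        have "?g w i = ?q \<longleftrightarrow> i \<in> S" if "i \<in> A" for i
          using zv[of i] that wSz by auto
        then show ?thesis using S by auto
      qed
      have 2: "restrict (?g w) (A - S) = z"
      proof
        fix i show "restrict (?g w) (A - S) i = z i" using zu wSz by auto
      qed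
      show "?f (?g w) = w" using 1 2 wSz by simp
    qed
    show "?f ` Yset A ?q k \<subseteq> Sigma ?Sub (\<lambda>S. Yset (A - S) p k)"
    proof
      fix w assume "w \<in> ?f ` Yset A ?q k"
      then obtain y where y: "y \<in> Yset A ?q k" "w = ?f y" by blast
      have yv: "y i \<in> {1..?q}" if "i \<in> A" for i using y that by (auto simp: Yset_def)
      have yc: "card {i \<in> A. y i = s} = k s" if "s \<in> {1..?q}" for s using y that by (auto simp: Yset_def)
      let ?S = "{i \<in> A. y i = ?q}"
      have "?S \<in> ?Sub" using yc[of ?q] by auto
      moreover have "restrict y (A - ?S) \<in> Yset (A - ?S) p k"
      proof -
        have "restrict y (A - ?S) \<in> PiE (A - ?S) (\<lambda>_. {1..p})"
        proof (rule restrict_PiE_iff[THEN iffD2], intro ballI)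
          fix i assume i: "i \<in> A - ?S"
          then have "y i \<in> {1..?q}" "y i \<noteq> ?q" using yv by auto
          then show "y i \<in> {1..p}" by auto
        qed
        moreover have "card {i \<in> A - ?S. restrict y (A - ?S) i = s} = k s" if "s \<in> {1..p}" for s
        proof -
          have "{i \<in> A - ?S. restrict y (A - ?S) i = s} = {i \<in> A. y i = s}" using that by auto
          then show ?thesis using yc[of s] that by simp
        qed
        ultimately show ?thesis by (simp add: Yset_def)
      qed
      ultimately show "w \<in> Sigma ?Sub (\<lambda>S. Yset (A - S) p k)" using y(2) by simp
    qed
    show "?g ` Sigma ?Sub (\<lambda>S. Yset (A - S) p k) \<subseteq> Yset A ?q k"
    proof
      fix y assume "y \<in> ?g ` Sigma ?Sub (\<lambda>S. Yset (A - S) p k)"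
      then obtain S z where Sz: "S \<in> ?Sub" "z \<in> Yset (A - S) p k" "y = ?g (S, z)" by blast
      have S: "S \<subseteq> A" "card S = k ?q" using Sz by auto
      have z: "z \<in> PiE (A - S) (\<lambda>_. {1..p})" using Sz by (simp add: Yset_def)
      have zc: "card {i \<in> A - S. z i = s} = k s" if "s \<in> {1..p}" for s using Sz that by (simp add: Yset_def)
      have zv: "z i \<in> {1..p}" if "i \<in> A - S" for i using z that by auto
      have zu: "z i = undefined" if "i \<notin> A - S" for i using z that by (auto simp: PiE_def extensional_def)
      have "y \<in> PiE A (\<lambda>_. {1..?q})"
      proof
        show "y i \<in> {1..?q}" if "i \<in> A" for i using zv[of i] that Sz(3) by auto
        show "y i = undefined" if "i \<notin> A" for i using zu[of i] that Sz(3) S by auto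
      qed
      moreover have "card {i \<in> A. y i = s} = k s" if s: "s \<in> {1..?q}" for s
      proof (cases "s = ?q")
        case True
        have "y i = s \<longleftrightarrow> i \<in> S" if "i \<in> A" for i
          using zv[of i] that True Sz(3) by auto
        then have "{i \<in> A. y i = s} = S" using S(1) by blast
        then show ?thesis using S True by simp
      next
        case False
        then have "{i \<in> A. y i = s} = {i \<in> A - S. z i = s}" using Sz(3) s by auto
        then show ?thesis using zc[of s] s False by simp
      qed
      ultimately show "y \<in> Yset A ?q k" by (simp add: Yset_def)
    qed
  qed
  then show ?thesis by (rule bij_betw_same_card)
qed

lemma count_mult:
  assumes "finite A" "(\<Sum>s=1..p. k s) = card A"
  shows "real (card (Yset A p k)) = fact (card A) / (\<Prod>s=1..p. fact (k s))"
  using assms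
proof (induction p arbitrary: A)
  case 0
  then have "A = {}" by simp
  then have "Yset A 0 k = {\<lambda>_. undefined}" by (auto simp: Yset_def)
  then show ?case using \<open>A = {}\<close> by simp
next
  case (Suc p)
  let ?K = "k (Suc p)"
  let ?Sub = "{S. S \<subseteq> A \<and> card S = ?K}"
  have Km: "?K \<le> card A" using Suc.prems(2) by simp
  have fSub: "finite ?Sub" using Suc.prems(1) by simp
  have IH: "real (card (Yset (A - S) p k)) = fact (card A - ?K) / (\<Prod>s=1..p. fact (k s))"
    if "S \<in> ?Sub" for S
  proof -
    have S: "S \<subseteq> A" "card S = ?K" using that by auto
    have cA: "card (A - S) = card A - ?K" using S Suc.prems(1) by (simp add: card_Diff_subset finite_subset)
    have "(\<Sum>s=1..p. k s) = card A - ?K" using Suc.prems(2) by simp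
    then show ?thesis using Suc.IH[of "A - S"] Suc.prems(1) cA by simp
  qed
  have "real (card (Yset A (Suc p) k)) = real (card (Sigma ?Sub (\<lambda>S. Yset (A - S) p k)))"
    using Yset_step[OF Suc.prems(1)] by simp
  also have "\<dots> = (\<Sum>S\<in>?Sub. real (card (Yset (A - S) p k)))"
  proof -
    have "\<forall>S\<in>?Sub. finite (Yset (A - S) p k)"
    proof
      fix S assume "S \<in> ?Sub"
      have "finite (PiE (A - S) (\<lambda>_. {1..p}))" using Suc.prems(1) by (simp add: finite_PiE)
      then show "finite (Yset (A - S) p k)" unfolding Yset_def by simp
    qed
    then show ?thesis using fSub by (simp add: card_SigmaI)
  qed
  also have "\<dots> = (\<Sum>S\<in>?Sub. fact (card A - ?K) / (\<Prod>s=1..p. fact (k s)))"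
    using IH by (intro sum.cong refl) simp
  also have "\<dots> = real (card A choose ?K) * (fact (card A - ?K) / (\<Prod>s=1..p. fact (k s)))"
    using n_subsets[OF Suc.prems(1), of ?K] by simp
  also have "\<dots> = fact (card A) / (fact ?K * (\<Prod>s=1..p. fact (k s)))"
    using binomial_fact[OF Km] by (simp add: field_simps)
  also have "\<dots> = fact (card A) / (\<Prod>s=1..Suc p. fact (k s))"
    by (simp add: mult.commute)
  finally show ?case .
qed

lemma pow_sum:
  assumes "finite F"
  shows "(\<Sum>B\<in>Pow F. (a::real) ^ card B) = (a + 1) ^ card F"
  using assms
proof (induction F rule: finite_induct)
  case empty then show ?case by simp
next
  case (insert x F)
  have PI: "Pow (insert x F) = Pow F \<union> insert x ` Pow F" by (rule Pow_insert)
  have disj: "Pow F \<inter> insert x ` Pow F = {}" using insert(2) by auto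
  have inj: "inj_on (insert x) (Pow F)" using insert(2) by (auto simp: inj_on_def)
  have c: "card (insert x B) = Suc (card B)" if "B \<in> Pow F" for B
  proof -
    have "finite B" using that insert(1) finite_subset[of B F] by auto
    moreover have "x \<notin> B" using that insert(2) by auto
    ultimately show ?thesis by simp
  qed
  have "(\<Sum>B\<in>Pow (insert x F). a ^ card B) = (\<Sum>B\<in>Pow F. a ^ card B) + (\<Sum>B\<in>insert x ` Pow F. a ^ card B)"
    unfolding PI by (rule sum.union_disjoint) (use insert(1) disj in auto)
  also have "(\<Sum>B\<in>insert x ` Pow F. a ^ card B) = (\<Sum>B\<in>Pow F. a ^ card (insert x B))"
    by (rule sum.reindex[OF inj, unfolded comp_def])
  also have "\<dots> = (\<Sum>B\<in>Pow F. a * a ^ card B)" using c by (intro sum.cong refl) simp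
  also have "\<dots> = a * (a + 1) ^ card F" using insert(3) by (simp add: sum_distrib_left[symmetric])
  finally show ?case using insert(1,2,3) by (simp add: algebra_simps)
qed

lemma sum_card_parts:
  assumes "finite A" "\<forall>i\<in>A. y i \<in> {1..p}"
  shows "(\<Sum>s=1..p. card {i \<in> A. y i = (s::nat)}) = card A"
proof -
  have "A = (\<Union>s\<in>{1..p}. {i \<in> A. y i = s})" using assms(2) by auto
  then have "card A = card (\<Union>s\<in>{1..p}. {i \<in> A. y i = s})" by simp
  also have "\<dots> = (\<Sum>s=1..p. card {i \<in> A. y i = s})"
    by (rule card_UN_disjoint) (use assms(1) in auto)
  finally show ?thesis by simp
qed

definition hp :: "nat \<Rightarrow> nat \<times> nat \<Rightarrow> (nat \<Rightarrow> real) set" where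
  "hp n e = hyperplane n (fst e) (snd e)"

lemma Inter_hp: "Rn n \<inter> \<Inter>(hp n ` E) = Sp n E"
  unfolding hp_def hyperplane_def Sp_def by fastforce

lemma rank_hp:
  assumes "E \<subseteq> {1..n} \<times> {1..n}"
  shows "arr_rank n (hp n ` E) = n - card (comps n E)"
  unfolding arr_rank_def Inter_hp dim_Sp[OF assms] ..

lemma hp_inj:
  assumes "E \<subseteq> pos_roots n"
  shows "inj_on (hp n) E"
proof (rule inj_onI)
  fix e e' assume e: "e \<in> E" "e' \<in> E" and eq: "hp n e = hp n e'"
  obtain i j where ij: "e = (i, j)" by (cases e)
  obtain i' j' where ij': "e' = (i', j')" by (cases e')
  have P: "1 \<le> i" "i < j" "j \<le> n" "1 \<le> i'" "i' < j'" "j' \<le> n"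
    using e assms ij ij' by (auto simp: pos_roots_def)
  define x where "x = (\<lambda>k. if k = i then (1::real) else 0)"
  define z where "z = (\<lambda>k. if k = j then (1::real) else 0)"
  have xR: "x \<in> Rn n" "z \<in> Rn n" using P by (auto simp: Rn_def x_def z_def)
  have "x \<notin> hp n e" using P by (simp add: hp_def hyperplane_def ij x_def)
  then have "x \<notin> hp n e'" using eq by simp
  then have "i = i' \<or> i = j'" using xR P by (auto simp: hp_def hyperplane_def ij' x_def split: if_splits)
  have "z \<notin> hp n e" using P by (simp add: hp_def hyperplane_def ij z_def)
  then have "z \<notin> hp n e'" using eq by simp
  then have "j = i' \<or> j = j'" using xR P by (auto simp: hp_def hyperplane_def ij' z_def split: if_splits)
  show "e = e'" using \<open>i = i' \<or> i = j'\<close> \<open>j = i' \<or> j = j'\<close> P ij ij' by auto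
qed

lemma arr_eq: "arr n I = hp n ` compl_roots n I"
  unfolding arr_def hp_def by force

context AI
begin

lemma hp_inj_C: "inj_on (hp n) C"
  using hp_inj[OF C_pos] .

lemma sum_arr: "(\<Sum>B\<in>Pow (arr n I). f B) = (\<Sum>E\<in>Pow C. f (hp n ` E))"
proof -
  have "Pow (arr n I) = image (hp n) ` Pow C" unfolding arr_eq by (rule image_Pow_surj[OF refl, symmetric])
  then have "(\<Sum>B\<in>Pow (arr n I). f B) = (\<Sum>B\<in>image (hp n) ` Pow C. f B)" by simp
  also have "\<dots> = (\<Sum>E\<in>Pow C. f (hp n ` E))"
    by (rule sum.reindex[OF inj_on_image_Pow[OF hp_inj_C], unfolded comp_def])
  finally show ?thesis .
qed

lemma E_sq: "E \<in> Pow C \<Longrightarrow> E \<subseteq> {1..n} \<times> {1..n}"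
  using C_sq by auto

lemma rankA: "arr_rank n (arr n I) = n - 1"
  unfolding arr_eq rank_hp[OF C_sq] using comps_connected[of n C] simple_in_C n2 by simp

lemma cardE: "E \<in> Pow C \<Longrightarrow> card (hp n ` E) = card E"
  by (rule card_image) (meson PowD hp_inj_C inj_on_subset)

lemma coboundary_edges:
  "coboundary n (arr n I) q t = (\<Sum>E\<in>Pow C. q ^ (card (comps n E) - 1) * (t - 1) ^ card E)"
proof -
  have "coboundary n (arr n I) q t = (\<Sum>E\<in>Pow C. q ^ (arr_rank n (arr n I) - arr_rank n (hp n ` E)) * (t - 1) ^ card (hp n ` E))"
    unfolding coboundary_def by (rule sum_arr)
  also have "\<dots> = (\<Sum>E\<in>Pow C. q ^ (card (comps n E) - 1) * (t - 1) ^ card E)"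
  proof (intro sum.cong refl)
    fix E assume E: "E \<in> Pow C"
    have "card (comps n E) \<ge> 1" using comps_card_ge1 n2 by simp
    moreover have "card (comps n E) \<le> n" by (rule comps_card_le)
    ultimately have "n - 1 - (n - card (comps n E)) = card (comps n E) - 1" by simp
    then show "q ^ (arr_rank n (arr n I) - arr_rank n (hp n ` E)) * (t - 1) ^ card (hp n ` E) =
      q ^ (card (comps n E) - 1) * (t - 1) ^ card E"
      using rankA rank_hp[OF E_sq[OF E]] cardE[OF E] by simp
  qed
  finally show ?thesis .
qed

lemma tutte_edges:
  "tutte n (arr n I) x y = (\<Sum>E\<in>Pow C. (x - 1) ^ (card (comps n E) - 1) * (y - 1) ^ (card E - (n - card (comps n E))))"
proof -
  have "tutte n (arr n I) x y = (\<Sum>E\<in>Pow C. (x - 1) ^ (arr_rank n (arr n I) - arr_rank n (hp n ` E)) *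
                                 (y - 1) ^ (card (hp n ` E) - arr_rank n (hp n ` E)))"
    unfolding tutte_def by (rule sum_arr)
  also have "\<dots> = (\<Sum>E\<in>Pow C. (x - 1) ^ (card (comps n E) - 1) * (y - 1) ^ (card E - (n - card (comps n E))))"
  proof (intro sum.cong refl)
    fix E assume E: "E \<in> Pow C"
    have "card (comps n E) \<ge> 1" using comps_card_ge1 n2 by simp
    moreover have "card (comps n E) \<le> n" by (rule comps_card_le)
    ultimately have "n - 1 - (n - card (comps n E)) = card (comps n E) - 1" by simp
    then show "(x - 1) ^ (arr_rank n (arr n I) - arr_rank n (hp n ` E)) * (y - 1) ^ (card (hp n ` E) - arr_rank n (hp n ` E)) =
      (x - 1) ^ (card (comps n E) - 1) * (y - 1) ^ (card E - (n - card (comps n E)))"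
      using rankA rank_hp[OF E_sq[OF E]] cardE[OF E] by simp
  qed
  finally show ?thesis .
qed

end

context AI
begin

definition X :: "nat \<Rightarrow> (nat \<Rightarrow> nat) set" where
  "X p = PiE {1..n} (\<lambda>_. {1..p})"

definition hh :: "(nat \<Rightarrow> nat) \<Rightarrow> nat" where
  "hh x = card {e \<in> C. x (fst e) = x (snd e)}"

lemma X_fin: "finite (X p)"
  by (simp add: X_def finite_PiE)

lemma S1: "(\<Sum>x\<in>X p. (t::real) ^ hh x) = (\<Sum>E\<in>Pow C. real p ^ card (comps n E) * (t - 1) ^ card E)"
proof -
  let ?F = "\<lambda>x. {e \<in> C. x (fst e) = x (snd e)}"
  have "(\<Sum>x\<in>X p. t ^ hh x) = (\<Sum>x\<in>X p. \<Sum>B\<in>Pow (?F x). (t - 1) ^ card B)"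
  proof (intro sum.cong refl)
    fix x :: "nat \<Rightarrow> nat"
    have "finite (?F x)" using C_fin by simp
    then show "t ^ hh x = (\<Sum>B\<in>Pow (?F x). (t - 1) ^ card B)"
      using pow_sum[of "?F x" "t - 1"] by (simp add: hh_def)
  qed
  also have "\<dots> = (\<Sum>x\<in>X p. \<Sum>B\<in>Pow C. if B \<subseteq> ?F x then (t - 1) ^ card B else 0)"
  proof (rule sum.cong[OF refl])
    fix x :: "nat \<Rightarrow> nat"
    have "Pow (?F x) = {B \<in> Pow C. B \<subseteq> ?F x}" by auto
    then show "(\<Sum>B\<in>Pow (?F x). (t - 1) ^ card B) = (\<Sum>B\<in>Pow C. if B \<subseteq> ?F x then (t - 1) ^ card B else 0)"
      using C_fin sum.inter_filter[of "Pow C" "\<lambda>B. (t - 1) ^ card B" "\<lambda>B. B \<subseteq> ?F x"] by simp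
  qed
  also have "\<dots> = (\<Sum>B\<in>Pow C. \<Sum>x\<in>X p. if B \<subseteq> ?F x then (t - 1) ^ card B else 0)"
    by (rule sum.swap)
  also have "\<dots> = (\<Sum>E\<in>Pow C. real p ^ card (comps n E) * (t - 1) ^ card E)"
  proof (rule sum.cong[OF refl])
    fix B assume B: "B \<in> Pow C"
    have "(\<Sum>x\<in>X p. if B \<subseteq> ?F x then (t - 1) ^ card B else 0) = (\<Sum>x\<in>{x \<in> X p. B \<subseteq> ?F x}. (t - 1) ^ card B)"
      using X_fin sum.inter_filter[of "X p" "\<lambda>_. (t - 1) ^ card B" "\<lambda>x. B \<subseteq> ?F x"] by simp
    also have "\<dots> = real (card {x \<in> X p. B \<subseteq> ?F x}) * (t - 1) ^ card B" by simp
    also have "{x \<in> X p. B \<subseteq> ?F x} = {x \<in> PiE {1..n} (\<lambda>_. {1..p}). \<forall>(a, b) \<in> B. x a = x b}"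
      using B by (auto simp: X_def)
    also have "card \<dots> = p ^ card (comps n B)" by (rule count_const[OF E_sq[OF B]])
    finally show "(\<Sum>x\<in>X p. if B \<subseteq> ?F x then (t - 1) ^ card B else 0) = real p ^ card (comps n B) * (t - 1) ^ card B"
      by simp
  qed
  finally show ?thesis .
qed

lemma coboundary_X:
  "real p * coboundary n (arr n I) (real p) t = (\<Sum>x\<in>X p. t ^ hh x)"
proof -
  have "real p * coboundary n (arr n I) (real p) t = (\<Sum>E\<in>Pow C. real p * (real p ^ (card (comps n E) - 1) * (t - 1) ^ card E))"
    unfolding coboundary_edges by (simp add: sum_distrib_left)
  also have "\<dots> = (\<Sum>E\<in>Pow C. real p ^ card (comps n E) * (t - 1) ^ card E)"
  proof (intro sum.cong refl)
    fix E
    have "card (comps n E) \<ge> 1" using comps_card_ge1 n2 by simp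
    then have "real p * real p ^ (card (comps n E) - 1) = real p ^ card (comps n E)"
      by (metis Suc_diff_1 le_eq_less_or_eq less_one not_less power_Suc zero_less_iff_neq_zero less_le_trans)
    then show "real p * (real p ^ (card (comps n E) - 1) * (t - 1) ^ card E) = real p ^ card (comps n E) * (t - 1) ^ card E"
      by (simp add: mult.assoc[symmetric])
  qed
  also have "\<dots> = (\<Sum>x\<in>X p. t ^ hh x)" by (rule S1[symmetric])
  finally show ?thesis .
qed

definition fam :: "nat \<Rightarrow> (nat \<Rightarrow> nat) \<Rightarrow> nat \<Rightarrow> nat \<Rightarrow> nat" where
  "fam p x = (\<lambda>u s. if u \<in> {1..r} \<and> s \<in> {1..p} then card {i \<in> block n I u. x i = s} else 0)"

definition expo :: "nat \<Rightarrow> (nat \<Rightarrow> nat \<Rightarrow> nat) \<Rightarrow> nat" where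
  "expo p a = (\<Sum>u=1..r. \<Sum>s=1..p. (a u s choose 2) + a u s * (\<Sum>v\<in>Rset n I u. a v s))"

lemma Rset_sub: "Rset n I u \<subseteq> {1..r}"
  by (auto simp: Rset_def)

lemma hh_expo:
  assumes x: "x \<in> X p"
  shows "hh x = expo p (fam p x)"
proof -
  let ?V = "\<lambda>s. {i \<in> {1..n}. x i = s}"
  have xv: "x i \<in> {1..p}" if "i \<in> {1..n}" for i using x that by (auto simp: X_def)
  have "{e \<in> C. x (fst e) = x (snd e)} = (\<Union>s\<in>{1..p}. {e \<in> C. fst e \<in> ?V s \<and> snd e \<in> ?V s})"
  proof (rule set_eqI)
    fix e
    show "e \<in> {e \<in> C. x (fst e) = x (snd e)} \<longleftrightarrow> e \<in> (\<Union>s\<in>{1..p}. {e \<in> C. fst e \<in> ?V s \<and> snd e \<in> ?V s})"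
    proof
      assume e: "e \<in> {e \<in> C. x (fst e) = x (snd e)}"
      then have "fst e \<in> {1..n}" "snd e \<in> {1..n}" using C_sq by auto
      then show "e \<in> (\<Union>s\<in>{1..p}. {e \<in> C. fst e \<in> ?V s \<and> snd e \<in> ?V s})"
        using e xv[of "fst e"] by auto
    qed auto
  qed
  then have "hh x = card (\<Union>s\<in>{1..p}. {e \<in> C. fst e \<in> ?V s \<and> snd e \<in> ?V s})" by (simp add: hh_def)
  also have "\<dots> = (\<Sum>s=1..p. card {e \<in> C. fst e \<in> ?V s \<and> snd e \<in> ?V s})"
    by (rule card_UN_disjoint) (use C_fin in auto)
  also have "\<dots> = (\<Sum>s=1..p. \<Sum>u=1..r. (cnt (?V s) u choose 2) + cnt (?V s) u * (\<Sum>v\<in>Rset n I u. cnt (?V s) v))"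
    by (intro sum.cong refl pairs_count) auto
  also have "\<dots> = (\<Sum>s=1..p. \<Sum>u=1..r. (fam p x u s choose 2) + fam p x u s * (\<Sum>v\<in>Rset n I u. fam p x v s))"
  proof (intro sum.cong refl)
    fix s u assume s: "s \<in> {1..p}" and u: "u \<in> {1..r}"
    have c: "cnt (?V s) w = fam p x w s" if "w \<in> {1..r}" for w
    proof -
      have "?V s \<inter> block n I w = {i \<in> block n I w. x i = s}" using block_sub[OF that] by auto
      then show ?thesis using that s by (simp add: cnt_def fam_def)
    qed
    have "(\<Sum>v\<in>Rset n I u. cnt (?V s) v) = (\<Sum>v\<in>Rset n I u. fam p x v s)"
      using c Rset_sub by (intro sum.cong refl) blast
    then show "(cnt (?V s) u choose 2) + cnt (?V s) u * (\<Sum>v\<in>Rset n I u. cnt (?V s) v) =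
      (fam p x u s choose 2) + fam p x u s * (\<Sum>v\<in>Rset n I u. fam p x v s)"
      using c[OF u] by simp
  qed
  also have "\<dots> = expo p (fam p x)"
    unfolding expo_def by (rule sum.swap)
  finally show ?thesis .
qed

lemma fam_in:
  assumes x: "x \<in> X p"
  shows "fam p x \<in> families n I p"
proof -
  have "(\<Sum>s=1..p. fam p x u s) = card (block n I u)" if u: "u \<in> {1..r}" for u
  proof -
    have "(\<Sum>s=1..p. fam p x u s) = (\<Sum>s=1..p. card {i \<in> block n I u. x i = s})"
      using u by (intro sum.cong refl) (simp add: fam_def)
    also have "\<dots> = card (block n I u)"
    proof (rule sum_card_parts)
      show "finite (block n I u)" using block_fin[OF u] .
      show "\<forall>i\<in>block n I u. x i \<in> {1..p}" using x block_sub[OF u] by (auto simp: X_def)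
    qed
    finally show ?thesis .
  qed
  then show ?thesis unfolding families_def by (auto simp: fam_def)
qed

lemma families_fin: "finite (families n I p)"
proof -
  let ?D = "{1..r} \<times> {1..p}"
  let ?h = "\<lambda>f u s. if (u, s) \<in> ?D then f (u, s) else (0::nat)"
  have "families n I p \<subseteq> ?h ` PiE ?D (\<lambda>_. {0..n})"
  proof
    fix a assume a: "a \<in> families n I p"
    have z: "a u s = 0" if "(u, s) \<notin> ?D" for u s using a that by (auto simp: families_def)
    have b: "a u s \<le> n" if "(u, s) \<in> ?D" for u s
    proof -
      have u: "u \<in> {1..r}" and s: "s \<in> {1..p}" using that by auto
      have "a u s \<le> (\<Sum>s=1..p. a u s)" using s by (intro member_le_sum) auto
      also have "\<dots> = card (block n I u)" using a u by (auto simp: families_def)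
      also have "\<dots> \<le> card {1..n}" by (rule card_mono) (use block_sub[OF u] in auto)
      finally show ?thesis by simp
    qed
    have "a = ?h (restrict (\<lambda>(u, s). a u s) ?D)"
      using z by (auto simp: fun_eq_iff)
    moreover have "restrict (\<lambda>(u, s). a u s) ?D \<in> PiE ?D (\<lambda>_. {0..n})" using b by auto
    ultimately show "a \<in> ?h ` PiE ?D (\<lambda>_. {0..n})" by blast
  qed
  moreover have "finite (?h ` PiE ?D (\<lambda>_. {0..n}))" by (simp add: finite_PiE)
  ultimately show ?thesis by (rule finite_subset)
qed

end

lemma prod_list_fact: "(\<Prod>k\<leftarrow>map f [1..<p+1]. fact k) = (\<Prod>s=1..p. (fact (f s) :: real))"
proof -
  have "(\<Prod>k\<leftarrow>map f [1..<p+1]. (fact k :: real)) = (\<Prod>s\<leftarrow>[1..<p+1]. fact (f s))"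
    by (simp add: comp_def)
  also have "\<dots> = (\<Prod>s\<in>set [1..<p+1]. fact (f s))"
    by (rule prod.distinct_set_conv_list[symmetric]) simp
  also have "set [1..<p+1] = {1..p}" by auto
  finally show ?thesis .
qed

context AI
begin

lemma fiber_card:
  assumes a: "a \<in> families n I p"
  shows "real (card {x \<in> X p. fam p x = a}) =
    (\<Prod>u=1..r. multinomial (card (block n I u)) (map (a u) [1..<p+1]))"
proof -
  have az: "a u s = 0" if "u \<notin> {1..r} \<or> s \<notin> {1..p}" for u s using a that by (auto simp: families_def)
  have asum: "(\<Sum>s=1..p. a u s) = card (block n I u)" if "u \<in> {1..r}" for u
    using a that by (auto simp: families_def)
  let ?Z = "PiE {1..r} (\<lambda>u. Yset (block n I u) p (a u))"
  let ?F = "\<lambda>x. restrict (\<lambda>u. restrict x (block n I u)) {1..r}"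
  let ?G = "\<lambda>z. restrict (\<lambda>i. z (bl i) i) {1..n}"
  have fam_iff: "fam p x = a \<longleftrightarrow> (\<forall>u\<in>{1..r}. \<forall>s\<in>{1..p}. card {i \<in> block n I u. x i = s} = a u s)" for x
  proof
    assume h: "fam p x = a"
    show "\<forall>u\<in>{1..r}. \<forall>s\<in>{1..p}. card {i \<in> block n I u. x i = s} = a u s"
    proof (intro ballI)
      fix u s assume "u \<in> {1..r}" "s \<in> {1..p}"
      then have "fam p x u s = card {i \<in> block n I u. x i = s}" by (simp add: fam_def)
      then show "card {i \<in> block n I u. x i = s} = a u s" using h by simp
    qed
  next
    assume h: "\<forall>u\<in>{1..r}. \<forall>s\<in>{1..p}. card {i \<in> block n I u. x i = s} = a u s"
    show "fam p x = a"
    proof (intro ext)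
      fix u s show "fam p x u s = a u s"
        using h az[of u s] by (auto simp: fam_def)
    qed
  qed
  have "bij_betw ?F {x \<in> X p. fam p x = a} ?Z"
  proof (rule bij_betw_byWitness[where f' = ?G])
    show "\<forall>x\<in>{x \<in> X p. fam p x = a}. ?G (?F x) = x"
    proof
      fix x assume x: "x \<in> {x \<in> X p. fam p x = a}"
      show "?G (?F x) = x"
      proof
        fix i show "?G (?F x) i = x i"
        proof (cases "i \<in> {1..n}")
          case True then show ?thesis using bl[OF True] by simp
        next
          case False then show ?thesis using x by (auto simp: X_def PiE_def extensional_def)
        qed
      qed
    qed
    show "\<forall>z\<in>?Z. ?F (?G z) = z"
    proof
      fix z assume z: "z \<in> ?Z"
      show "?F (?G z) = z"
      proof
        fix u show "?F (?G z) u = z u"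
        proof (cases "u \<in> {1..r}")
          case True
          have zu: "z u \<in> PiE (block n I u) (\<lambda>_. {1..p})" using z True by (auto simp: Yset_def)
          have "restrict (?G z) (block n I u) = z u"
          proof
            fix i show "restrict (?G z) (block n I u) i = z u i"
            proof (cases "i \<in> block n I u")
              case True2: True
              then have "i \<in> {1..n}" using block_sub[OF True] by auto
              then show ?thesis using True2 bl_eq[OF True True2] by simp
            next
              case False then show ?thesis using zu by (auto simp: PiE_def extensional_def)
            qed
          qed
          then show ?thesis using True by simp
        next
          case False then show ?thesis using z by (auto simp: PiE_def extensional_def)
        qed
      qed
    qed
    show "?F ` {x \<in> X p. fam p x = a} \<subseteq> ?Z"
    proof
      fix w assume "w \<in> ?F ` {x \<in> X p. fam p x = a}"
      then obtain x where x: "x \<in> X p" "fam p x = a" "w = ?F x" by blast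
      have "restrict x (block n I u) \<in> Yset (block n I u) p (a u)" if u: "u \<in> {1..r}" for u
      proof -
        have "restrict x (block n I u) \<in> PiE (block n I u) (\<lambda>_. {1..p})"
          using x(1) block_sub[OF u] by (auto simp: X_def)
        moreover have "card {i \<in> block n I u. restrict x (block n I u) i = s} = a u s" if "s \<in> {1..p}" for s
        proof -
          have "{i \<in> block n I u. restrict x (block n I u) i = s} = {i \<in> block n I u. x i = s}" by auto
          then show ?thesis using x(2) fam_iff u that by simp
        qed
        ultimately show ?thesis by (simp add: Yset_def)
      qed
      then show "w \<in> ?Z" using x(3) by simp
    qed
    show "?G ` ?Z \<subseteq> {x \<in> X p. fam p x = a}"
    proof
      fix x assume "x \<in> ?G ` ?Z"
      then obtain z where z: "z \<in> ?Z" "x = ?G z" by blast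
      have zv: "z u i \<in> {1..p}" if "u \<in> {1..r}" "i \<in> block n I u" for u i
      proof -
        have "z u \<in> Yset (block n I u) p (a u)" using z(1) that(1) by auto
        then have "z u \<in> PiE (block n I u) (\<lambda>_. {1..p})" by (simp add: Yset_def)
        then show ?thesis using that(2) by auto
      qed
      have "x \<in> X p" unfolding X_def
      proof
        show "x i \<in> {1..p}" if "i \<in> {1..n}" for i using zv[OF bl[OF that]] z(2) that by simp
        show "x i = undefined" if "i \<notin> {1..n}" for i using z(2) that by auto
      qed
      moreover have "card {i \<in> block n I u. x i = s} = a u s" if u: "u \<in> {1..r}" and s: "s \<in> {1..p}" for u s
      proof -
        have "{i \<in> block n I u. x i = s} = {i \<in> block n I u. z u i = s}"
        proof (rule Collect_cong)
          fix i show "(i \<in> block n I u \<and> x i = s) = (i \<in> block n I u \<and> z u i = s)"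
          proof (cases "i \<in> block n I u")
            case True
            then have "i \<in> {1..n}" using block_sub[OF u] by auto
            then show ?thesis using True bl_eq[OF u True] z(2) by simp
          qed simp
        qed
        moreover have "card {i \<in> block n I u. z u i = s} = a u s"
        proof -
          have "z u \<in> Yset (block n I u) p (a u)" using z(1) u by auto
          then show ?thesis using s by (simp add: Yset_def)
        qed
        ultimately show ?thesis by simp
      qed
      ultimately show "x \<in> {x \<in> X p. fam p x = a}" using fam_iff by simp
    qed
  qed
  then have "card {x \<in> X p. fam p x = a} = card ?Z" by (rule bij_betw_same_card)
  also have "\<dots> = (\<Prod>u=1..r. card (Yset (block n I u) p (a u)))" by (simp add: card_PiE)
  finally have "real (card {x \<in> X p. fam p x = a}) = (\<Prod>u=1..r. real (card (Yset (block n I u) p (a u))))"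
    by simp
  also have "\<dots> = (\<Prod>u=1..r. multinomial (card (block n I u)) (map (a u) [1..<p+1]))"
  proof (rule prod.cong[OF refl])
    fix u assume u: "u \<in> {1..r}"
    have "real (card (Yset (block n I u) p (a u))) = fact (card (block n I u)) / (\<Prod>s=1..p. fact (a u s))"
      by (rule count_mult[OF block_fin[OF u] asum[OF u]])
    also have "\<dots> = multinomial (card (block n I u)) (map (a u) [1..<p+1])"
      unfolding multinomial_def prod_list_fact ..
    finally show "real (card (Yset (block n I u) p (a u))) = multinomial (card (block n I u)) (map (a u) [1..<p+1])" .
  qed
  finally show ?thesis .
qed

lemma S2: "(\<Sum>x\<in>X p. (t::real) ^ hh x) =
  (\<Sum>a\<in>families n I p. (\<Prod>u=1..r. multinomial (card (block n I u)) (map (a u) [1..<p+1])) * t ^ expo p a)"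
proof -
  have "(\<Sum>x\<in>X p. t ^ hh x) = (\<Sum>x\<in>X p. t ^ expo p (fam p x))"
    using hh_expo by simp
  also have "\<dots> = (\<Sum>a\<in>families n I p. \<Sum>x\<in>{x \<in> X p. fam p x = a}. t ^ expo p (fam p x))"
    by (rule sum.group[symmetric]) (use X_fin families_fin fam_in in auto)
  also have "\<dots> = (\<Sum>a\<in>families n I p. real (card {x \<in> X p. fam p x = a}) * t ^ expo p a)"
    by (rule sum.cong[OF refl]) simp
  also have "\<dots> = (\<Sum>a\<in>families n I p. (\<Prod>u=1..r. multinomial (card (block n I u)) (map (a u) [1..<p+1])) * t ^ expo p a)"
    using fiber_card by simp
  finally show ?thesis .
qed

lemma part2:
  assumes "p > 0"
  shows "coboundary n (arr n I) (real p) t = chi_formula n I p t"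
proof -
  have "real p * coboundary n (arr n I) (real p) t = real p * chi_formula n I p t"
    unfolding coboundary_X S2 chi_formula_def expo_def using assms by simp
  then show ?thesis using assms by simp
qed

end

lemma lagrange:
  fixes w :: "nat \<Rightarrow> real" and c :: "'e \<Rightarrow> real" and k :: "'e \<Rightarrow> nat"
  assumes fF: "finite F" and kN: "\<forall>e\<in>F. k e < N" and wi: "inj_on w {1..N}" and N: "N \<ge> 1"
  shows "(\<Sum>e\<in>F. c e * z ^ k e) =
    (\<Sum>i=1..N. (\<Prod>j\<in>{1..N} - {i}. (z - w j) / (w i - w j)) * (\<Sum>e\<in>F. c e * w i ^ k e))"
proof -
  define f where "f v = (\<Sum>e\<in>F. c e * v ^ k e)" for v
  define P where "P = (\<Sum>e\<in>F. monom (c e) (k e))"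
  define B where "B i = (\<Prod>j\<in>{1..N} - {i}. smult (1 / (w i - w j)) [:- w j, 1:])" for i
  define Q where "Q = (\<Sum>i=1..N. smult (f (w i)) (B i))"
  have polyP: "poly P v = f v" for v by (simp add: P_def f_def poly_sum poly_monom)
  have polyB: "poly (B i) v = (\<Prod>j\<in>{1..N} - {i}. (v - w j) / (w i - w j))" for i v
    unfolding B_def poly_prod by (rule prod.cong[OF refl]) (simp add: divide_inverse algebra_simps)
  have polyQ: "poly Q v = (\<Sum>i=1..N. (\<Prod>j\<in>{1..N} - {i}. (v - w j) / (w i - w j)) * f (w i))" for v
    by (simp add: Q_def poly_sum polyB mult.commute)
  have degP: "degree P \<le> N - 1"
    unfolding P_def
  proof (rule degree_sum_le[OF fF])
    fix e assume "e \<in> F"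
    then show "degree (monom (c e) (k e)) \<le> N - 1" using kN degree_monom_le[of "c e" "k e"] by fastforce
  qed
  have degB: "degree (B i) \<le> N - 1" if "i \<in> {1..N}" for i
  proof -
    have "degree (B i) \<le> sum (degree \<circ> (\<lambda>j. smult (1 / (w i - w j)) [:- w j, 1:])) ({1..N} - {i})"
      unfolding B_def by (rule degree_prod_sum_le) simp
    also have "\<dots> \<le> sum (\<lambda>_. 1) ({1..N} - {i})"
      by (rule sum_mono) (simp add: degree_smult_le)
    also have "\<dots> = N - 1" using that by simp
    finally show ?thesis .
  qed
  have degQ: "degree Q \<le> N - 1"
    unfolding Q_def
  proof (rule degree_sum_le)
    fix i assume i: "i \<in> {1..N}"
    show "degree (smult (f (w i)) (B i)) \<le> N - 1" by (rule le_trans[OF degree_smult_le degB[OF i]])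
  qed simp
  have Bkk: "poly (B k) (w m) = (if m = k then 1 else 0)" if k: "k \<in> {1..N}" and m: "m \<in> {1..N}" for k m
  proof (cases "m = k")
    case True
    have "(\<Prod>j\<in>{1..N} - {k}. (w k - w j) / (w k - w j)) = (\<Prod>j\<in>{1..N} - {k}. (1::real))"
    proof (rule prod.cong[OF refl])
      fix j assume j: "j \<in> {1..N} - {k}"
      have "w k \<noteq> w j"
      proof
        assume "w k = w j"
        then have "k = j" using inj_onD[OF wi _ k] j by blast
        then show False using j by simp
      qed
      then show "(w k - w j) / (w k - w j) = 1" by simp
    qed
    then show ?thesis using True by (simp add: polyB)
  next
    case False
    then have "m \<in> {1..N} - {k}" using m by simp
    then have "(\<Prod>j\<in>{1..N} - {k}. (w m - w j) / (w k - w j)) = 0"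
      by (intro prod_zero) auto
    then show ?thesis using False by (simp add: polyB)
  qed
  have Qw: "poly Q (w m) = f (w m)" if m: "m \<in> {1..N}" for m
  proof -
    have "poly Q (w m) = (\<Sum>i=1..N. f (w i) * poly (B i) (w m))" by (simp add: Q_def poly_sum)
    also have "\<dots> = (\<Sum>i=1..N. if i = m then f (w i) else 0)"
    proof (rule sum.cong[OF refl])
      fix i assume i: "i \<in> {1..N}"
      show "f (w i) * poly (B i) (w m) = (if i = m then f (w i) else 0)" using Bkk[OF i m] by simp
    qed
    also have "\<dots> = f (w m)" using m by (simp add: sum.delta')
    finally show ?thesis .
  qed
  have "P - Q = 0"
  proof (rule ccontr)
    assume ne: "P - Q \<noteq> 0"
    have "w ` {1..N} \<subseteq> {v. poly (P - Q) v = 0}" using Qw polyP by auto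
    then have "card (w ` {1..N}) \<le> card {v. poly (P - Q) v = 0}"
      by (rule card_mono[OF poly_roots_finite[OF ne]])
    also have "\<dots> \<le> degree (P - Q)" by (rule card_poly_roots_bound[OF ne])
    also have "\<dots> \<le> N - 1" using degP degQ by (meson degree_diff_le)
    finally have "card (w ` {1..N}) \<le> N - 1" .
    moreover have "card (w ` {1..N}) = N" using card_image[OF wi] by simp
    ultimately show False using N by simp
  qed
  then have "poly P z = poly Q z" by simp
  then show ?thesis unfolding polyP polyQ f_def by (simp add: mult.commute)
qed

lemma oddp_inj: "inj_on oddp {1..n}"
proof -
  have inf: "infinite {p::nat. prime p \<and> odd p}"
  proof
    assume "finite {p::nat. prime p \<and> odd p}"
    then have "finite (insert 2 {p::nat. prime p \<and> odd p})" by simp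
    moreover have "{p::nat. prime p} \<subseteq> insert 2 {p::nat. prime p \<and> odd p}"
    proof
      fix x :: nat assume "x \<in> {p. prime p}"
      then have px: "prime x" by simp
      show "x \<in> insert 2 {p::nat. prime p \<and> odd p}"
      proof (cases "x = 2")
        case False
        then have "x > 2" using prime_ge_2_nat[OF px] by simp
        then show ?thesis using prime_odd_nat[OF px] px by simp
      qed simp
    qed
    ultimately have "finite {p::nat. prime p}" by (rule finite_subset[rotated])
    then show False using primes_infinite by simp
  qed
  show ?thesis
  proof (rule inj_onI)
    fix i j assume ij: "i \<in> {1..n}" "j \<in> {1..n}" "oddp i = oddp j"
    then have "enumerate {p::nat. prime p \<and> odd p} (i - 1) = enumerate {p::nat. prime p \<and> odd p} (j - 1)"
      by (simp add: oddp_def)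
    then have "i - 1 = j - 1"
    proof (rule contrapos_pp)
      assume ne: "i - 1 \<noteq> j - 1"
      show "enumerate {p::nat. prime p \<and> odd p} (i - 1) \<noteq> enumerate {p::nat. prime p \<and> odd p} (j - 1)"
      proof (cases "i - 1 < j - 1")
        case True
        then show ?thesis using enumerate_mono[OF True inf] by simp
      next
        case False
        then have "j - 1 < i - 1" using ne by simp
        then show ?thesis using enumerate_mono[OF _ inf, of "j - 1" "i - 1"] by simp
      qed
    qed
    then show "i = j" using ij by auto
  qed
qed

context AI
begin

lemma part1:
  assumes y: "y \<noteq> 1"
  shows "tutte n (arr n I) x y =
    1 / (y - 1) ^ (n - 1) *
      (\<Sum>i=1..n. (\<Prod>j\<in>{1..n} - {i}.
        ((x - 1) * (y - 1) - real (oddp j)) / (real (oddp i) - real (oddp j))) *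
          coboundary n (arr n I) (real (oddp i)) y)"
proof -
  let ?q = "(x - 1) * (y - 1)"
  let ?c = "\<lambda>E. card (comps n E)"
  have ck: "1 \<le> ?c E" "?c E \<le> n" for E using comps_card_ge1[of n E] n2 comps_card_le[of n E] by auto
  have "(y - 1) ^ (n - 1) * tutte n (arr n I) x y = (\<Sum>E\<in>Pow C. (y - 1) ^ card E * ?q ^ (?c E - 1))"
    unfolding tutte_edges sum_distrib_left
  proof (rule sum.cong[OF refl])
    fix E assume E: "E \<in> Pow C"
    have fE: "finite E" using C_fin E finite_subset by auto
    have le: "n - ?c E \<le> card E" using comps_card_edges[OF fE E_sq[OF E]] by simp
    have e1: "n - 1 = (?c E - 1) + (n - ?c E)" using ck[of E] by simp
    have e2: "card E = (n - ?c E) + (card E - (n - ?c E))" using le by simp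
    have "(y - 1) ^ (n - 1) * ((x - 1) ^ (?c E - 1) * (y - 1) ^ (card E - (n - ?c E))) =
      ((x - 1) ^ (?c E - 1) * (y - 1) ^ (?c E - 1)) * ((y - 1) ^ (n - ?c E) * (y - 1) ^ (card E - (n - ?c E)))"
      by (subst e1) (simp add: power_add algebra_simps)
    also have "\<dots> = ?q ^ (?c E - 1) * (y - 1) ^ card E"
      by (subst (2) e2) (simp add: power_add power_mult_distrib)
    finally show "(y - 1) ^ (n - 1) * ((x - 1) ^ (?c E - 1) * (y - 1) ^ (card E - (n - ?c E))) =
      (y - 1) ^ card E * ?q ^ (?c E - 1)" by simp
  qed
  also have "\<dots> = (\<Sum>i=1..n. (\<Prod>j\<in>{1..n} - {i}. (?q - real (oddp j)) / (real (oddp i) - real (oddp j))) *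
      (\<Sum>E\<in>Pow C. (y - 1) ^ card E * real (oddp i) ^ (?c E - 1)))"
  proof (rule lagrange)
    show "finite (Pow C)" using C_fin by simp
    show "\<forall>E\<in>Pow C. ?c E - 1 < n"
    proof
      fix E
      have "?c E \<le> n" "1 \<le> ?c E" using ck[of E] by auto
      then show "?c E - 1 < n" by arith
    qed
    show "inj_on (\<lambda>i. real (oddp i)) {1..n}"
    proof (rule inj_onI)
      fix i j assume "i \<in> {1..n}" "j \<in> {1..n}" "real (oddp i) = real (oddp j)"
      then show "i = j" using inj_onD[OF oddp_inj[of n]] by simp
    qed
    show "n \<ge> 1" using n2 by simp
  qed
  also have "\<dots> = (\<Sum>i=1..n. (\<Prod>j\<in>{1..n} - {i}. (?q - real (oddp j)) / (real (oddp i) - real (oddp j))) *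
      coboundary n (arr n I) (real (oddp i)) y)"
    unfolding coboundary_edges by (simp add: mult.commute)
  finally have "(y - 1) ^ (n - 1) * tutte n (arr n I) x y = (\<Sum>i=1..n. (\<Prod>j\<in>{1..n} - {i}. (?q - real (oddp j)) / (real (oddp i) - real (oddp j))) *
      coboundary n (arr n I) (real (oddp i)) y)" .
  moreover have "(y - 1) ^ (n - 1) \<noteq> 0" using y by simp
  ultimately show ?thesis by (simp add: field_simps)
qed

end

theorem mainTheorem12:
  fixes n :: nat and I :: "(nat \<times> nat) set"
  assumes "n \<ge> 2" and "is_ideal n I" and "is_full n (compl_roots n I)"
  shows "(\<forall>x y :: real. y \<noteq> 1 \<longrightarrow>
            tutte n (arr n I) x y =
              1 / (y - 1) ^ (n - 1) *
              (\<Sum>i=1..n. (\<Prod>j\<in>{1..n} - {i}.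
                   ((x - 1) * (y - 1) - real (oddp j)) / (real (oddp i) - real (oddp j))) *
                 coboundary n (arr n I) (real (oddp i)) y))
       \<and> (\<forall>p t. prime p \<and> odd p \<longrightarrow>
            coboundary n (arr n I) (real p) t = chi_formula n I p t)"
proof -
  interpret AI n I using assms by unfold_locales
  show ?thesis
  proof (intro conjI allI impI)
    fix x y :: real assume "y \<noteq> 1"
    then show "tutte n (arr n I) x y =
              1 / (y - 1) ^ (n - 1) *
              (\<Sum>i=1..n. (\<Prod>j\<in>{1..n} - {i}.
                   ((x - 1) * (y - 1) - real (oddp j)) / (real (oddp i) - real (oddp j))) *
                 coboundary n (arr n I) (real (oddp i)) y)"
      by (rule part1)
  next
    fix p :: nat and t :: real assume "prime p \<and> odd p"
    then have "p > 0" using prime_gt_0_nat by blast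
    then show "coboundary n (arr n I) (real p) t = chi_formula n I p t" by (rule part2)
  qed
qed

end
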